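(* Let $V=\mathbb R^{p,q}$, $p=p'+p''$ with $p'\equiv3\pmod4$, $W$ a $C\ell^0(V)$-module, $\Pi:\wedge^2W\to V$ an $\mathfrak o(V)$-equivariant linear map, and $b=b(\Pi)$. Then there exist integers $l,m\ge0$ and a $b$-orthogonal direct sum decomposition $W=\bigoplus_{i=0}^{l+m}W_i$ into $C\ell^0(V)$-submodules such that: (1) $\Pi(W_0\wedge W)=0$, $\Pi(W_i\wedge W_j)=0$ for $i\ne j$, and $\Pi(\wedge^2W_i)=V$ for $i=1,\dots,l$; (2) $W_0=\ker b$ and $b|_{W_i\times W_i}$ is nondegenerate for all $i\ge1$; (3) for $i=1,\dots,l$ the module $W_i$ is irreducible, and for $j=l+1,\dots,l+m$ the module $W_j=X_j\oplus X'_j$ is the direct sum of two irreducible $b$-isotropic $C\ell^0(V)$-submodules; (4) the restriction of $b$ to any irreducible $C\ell^0(V)$-submodule of $X=\bigoplus_{j=l+1}^{l+m}W_j$ vanishes.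
   Context: Let $V=\mathbb{R}^{p,q}$ be $\mathbb R^{p+q}$ with the scalar product $\langle x,y\rangle=\sum_{i=1}^{p}x^iy^i-\sum_{j=p+1}^{p+q}x^jy^j$ and its standard orthonormal basis. The Clifford algebra $C\ell(V)$ is generated by $V$ subject to $xy+yx=-2\langle x,y\rangle 1$, with even part $C\ell^0(V)$. Identify $\mathfrak{o}(V)=\wedge^2V$ via $(x\wedge y)(z)=\langle y,z\rangle x-\langle x,z\rangle y$; the map $x\wedge y\mapsto-\frac14(xy-yx)$ is a Lie algebra isomorphism of $\mathfrak o(V)$ onto $\mathfrak{spin}(V)\subset C\ell^0(V)$, and via it $\mathfrak o(V)$ acts on any $C\ell^0(V)$-module $W$. Fix $p=p'+p''$ with $p'\equiv 3\pmod 4$; $e_1,\dots,e_{p'}$ are the first $p'$ standard basis vectors, and $b(s,t)=\langle e_1,\Pi(e_2\cdots e_{p'}s\wedge t)\rangle$ for $s,t\in W$ (Clifford product acting on $W$); by a result of the paper $b$ is symmetric. A subspace is $b$-isotropic if $b$ vanishes on it. *)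

theory Defs
  imports "HOL-Analysis.Analysis"
begin

text \<open>Vectors of V = R^{p,q} are represented as functions nat => real vanishing
  outside the index range {..<p+q}; index i (0-based) is the (i+1)-th standard basis vector.\<close>

definition Vset :: "nat \<Rightarrow> (nat \<Rightarrow> real) set" where
  "Vset n = {x. \<forall>i\<ge>n. x i = 0}"

definition sgnpq :: "nat \<Rightarrow> nat \<Rightarrow> real" where
  "sgnpq p i = (if i < p then 1 else -1)"

definition ip :: "nat \<Rightarrow> nat \<Rightarrow> (nat \<Rightarrow> real) \<Rightarrow> (nat \<Rightarrow> real) \<Rightarrow> real" where
  "ip p q x y = (\<Sum>i<p+q. sgnpq p i * x i * y i)"

definition stdbasis :: "nat \<Rightarrow> nat \<Rightarrow> real" where
  "stdbasis i = (\<lambda>j. if j = i then 1 else 0)"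

text \<open>Elements are coefficient functions on the blade basis e_S = e_{s1}...e_{sk}
  (s1 < ... < sk), S a subset of {..<p+q}.  Relation: x y + y x = -2<x,y>, so e_i^2 = -<e_i,e_i>.\<close>

definition Cl :: "nat \<Rightarrow> (nat set \<Rightarrow> real) set" where
  "Cl n = {x. \<forall>S. \<not> S \<subseteq> {..<n} \<longrightarrow> x S = 0}"

definition Cl0 :: "nat \<Rightarrow> (nat set \<Rightarrow> real) set" where
  "Cl0 n = {x \<in> Cl n. \<forall>S. odd (card S) \<longrightarrow> x S = 0}"

definition blade_coeff :: "nat \<Rightarrow> nat set \<Rightarrow> nat set \<Rightarrow> real" where
  "blade_coeff p S T =
     (-1) ^ card {(s, t). s \<in> S \<and> t \<in> T \<and> t < s} * (\<Prod>i\<in>S \<inter> T. - sgnpq p i)"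

definition cl_mult :: "nat \<Rightarrow> nat \<Rightarrow> (nat set \<Rightarrow> real) \<Rightarrow> (nat set \<Rightarrow> real) \<Rightarrow> (nat set \<Rightarrow> real)" where
  "cl_mult p q x y = (\<lambda>U. \<Sum>S\<in>Pow {..<p+q}. \<Sum>T\<in>Pow {..<p+q}.
       if (S - T) \<union> (T - S) = U then x S * y T * blade_coeff p S T else 0)"

definition cl_one :: "nat set \<Rightarrow> real" where
  "cl_one = (\<lambda>S. if S = {} then 1 else 0)"

definition cl_blade :: "nat set \<Rightarrow> nat set \<Rightarrow> real" where
  "cl_blade S = (\<lambda>T. if T = S then 1 else 0)"

definition cl_vec :: "nat \<Rightarrow> (nat \<Rightarrow> real) \<Rightarrow> nat set \<Rightarrow> real" where
  "cl_vec n x = (\<lambda>S. if \<exists>i<n. S = {i} then x (the_elem S) else 0)"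

text \<open>The isomorphism o(V) = wedge^2 V --> spin(V): x wedge y |-> -1/4 (xy - yx).\<close>
definition spin :: "nat \<Rightarrow> nat \<Rightarrow> (nat \<Rightarrow> real) \<Rightarrow> (nat \<Rightarrow> real) \<Rightarrow> nat set \<Rightarrow> real" where
  "spin p q x y = (\<lambda>S. - (1/4) * (cl_mult p q (cl_vec (p+q) x) (cl_vec (p+q) y) S
                                  - cl_mult p q (cl_vec (p+q) y) (cl_vec (p+q) x) S))"

definition oV_act :: "nat \<Rightarrow> nat \<Rightarrow> (nat \<Rightarrow> real) \<Rightarrow> (nat \<Rightarrow> real) \<Rightarrow> (nat \<Rightarrow> real) \<Rightarrow> nat \<Rightarrow> real" where
  "oV_act p q x y z = (\<lambda>i. ip p q y z * x i - ip p q x z * y i)"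

definition cl0_module :: "nat \<Rightarrow> nat \<Rightarrow> ((nat set \<Rightarrow> real) \<Rightarrow> 'w::euclidean_space \<Rightarrow> 'w) \<Rightarrow> bool" where
  "cl0_module p q act \<longleftrightarrow>
     (\<forall>x\<in>Cl0 (p+q). linear (act x)) \<and>
     (\<forall>x\<in>Cl0 (p+q). \<forall>y\<in>Cl0 (p+q). \<forall>u. act (\<lambda>S. x S + y S) u = act x u + act y u) \<and>
     (\<forall>x\<in>Cl0 (p+q). \<forall>c u. act (\<lambda>S. c * x S) u = c *\<^sub>R act x u) \<and>
     (\<forall>u. act cl_one u = u) \<and>
     (\<forall>x\<in>Cl0 (p+q). \<forall>y\<in>Cl0 (p+q). \<forall>u. act (cl_mult p q x y) u = act x (act y u))"

definition cl0_submodule :: "nat \<Rightarrow> nat \<Rightarrow> ((nat set \<Rightarrow> real) \<Rightarrow> 'w::euclidean_space \<Rightarrow> 'w) \<Rightarrow> 'w set \<Rightarrow> bool" where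
  "cl0_submodule p q act U \<longleftrightarrow> subspace U \<and> (\<forall>x\<in>Cl0 (p+q). \<forall>u\<in>U. act x u \<in> U)"

definition cl0_irreducible :: "nat \<Rightarrow> nat \<Rightarrow> ((nat set \<Rightarrow> real) \<Rightarrow> 'w::euclidean_space \<Rightarrow> 'w) \<Rightarrow> 'w set \<Rightarrow> bool" where
  "cl0_irreducible p q act U \<longleftrightarrow> cl0_submodule p q act U \<and> U \<noteq> {0} \<and>
     (\<forall>U'. cl0_submodule p q act U' \<and> U' \<subseteq> U \<longrightarrow> U' = {0} \<or> U' = U)"

text \<open>A linear map Pmap : wedge^2 W --> V is represented (universal property of the exterior
  square) by the alternating bilinear map (s,t) |-> Pmap(s wedge t).\<close>
definition wedge2_map :: "nat \<Rightarrow> ('w::euclidean_space \<Rightarrow> 'w \<Rightarrow> nat \<Rightarrow> real) \<Rightarrow> bool" where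
  "wedge2_map n Pmap \<longleftrightarrow>
     (\<forall>s t. Pmap s t \<in> Vset n) \<and>
     (\<forall>s s' t. Pmap (s + s') t = (\<lambda>i. Pmap s t i + Pmap s' t i)) \<and>
     (\<forall>s t c. Pmap (c *\<^sub>R s) t = (\<lambda>i. c * Pmap s t i)) \<and>
     (\<forall>s t t'. Pmap s (t + t') = (\<lambda>i. Pmap s t i + Pmap s t' i)) \<and>
     (\<forall>s t c. Pmap s (c *\<^sub>R t) = (\<lambda>i. c * Pmap s t i)) \<and>
     (\<forall>s. Pmap s s = (\<lambda>i. 0))"

text \<open>o(V)-equivariance: Pmap(A s wedge t + s wedge A t) = A (Pmap (s wedge t)) for A = x wedge y,
  where A acts on W through spin(V) inside Cl^0(V).\<close>
definition oV_equivariant :: "nat \<Rightarrow> nat \<Rightarrow> ((nat set \<Rightarrow> real) \<Rightarrow> 'w::euclidean_space \<Rightarrow> 'w)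
    \<Rightarrow> ('w \<Rightarrow> 'w \<Rightarrow> nat \<Rightarrow> real) \<Rightarrow> bool" where
  "oV_equivariant p q act Pmap \<longleftrightarrow>
     (\<forall>x\<in>Vset (p+q). \<forall>y\<in>Vset (p+q). \<forall>s t.
        (\<lambda>i. Pmap (act (spin p q x y) s) t i + Pmap s (act (spin p q x y) t) i)
          = oV_act p q x y (Pmap s t))"

text \<open>b(s,t) = < e_1, Pmap(e_2 ... e_{p'} s wedge t) >; with 0-based indices e_2 ... e_{p'}
  is the blade on {1..<p'}.\<close>
definition bform :: "nat \<Rightarrow> nat \<Rightarrow> nat \<Rightarrow> ((nat set \<Rightarrow> real) \<Rightarrow> 'w::euclidean_space \<Rightarrow> 'w)
    \<Rightarrow> ('w \<Rightarrow> 'w \<Rightarrow> nat \<Rightarrow> real) \<Rightarrow> 'w \<Rightarrow> 'w \<Rightarrow> real" where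
  "bform p q p' act Pmap s t = ip p q (stdbasis 0) (Pmap (act (cl_blade {1..<p'}) s) t)"

definition Pi_image :: "('w::euclidean_space \<Rightarrow> 'w \<Rightarrow> nat \<Rightarrow> real) \<Rightarrow> 'w set \<Rightarrow> (nat \<Rightarrow> real) set" where
  "Pi_image Pmap U = {v. \<exists>(k::nat) s t. (\<forall>j<k. s j \<in> U \<and> t j \<in> U) \<and> v = (\<lambda>i. \<Sum>j<k. Pmap (s j) (t j) i)}"

end

theory Submission
  imports Defs
begin


lemma cl_mult_blade:
  assumes "S \<subseteq> {..<p+q}" "T \<subseteq> {..<p+q}"
  shows "cl_mult p q (cl_blade S) (cl_blade T) = (\<lambda>U. blade_coeff p S T * cl_blade ((S-T)\<union>(T-S)) U)"
proof
  fix U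
  have "cl_mult p q (cl_blade S) (cl_blade T) U =
    (\<Sum>S'\<in>Pow {..<p+q}. if S' = S then (\<Sum>T'\<in>Pow {..<p+q}. if T' = T then
        (if (S-T)\<union>(T-S) = U then blade_coeff p S T else 0) else 0) else 0)"
    unfolding cl_mult_def
  proof (intro sum.cong refl)
    fix S' assume "S' \<in> Pow {..<p+q}"
    show "(\<Sum>T'\<in>Pow {..<p + q}. if S' - T' \<union> (T' - S') = U then cl_blade S S' * cl_blade T T' * blade_coeff p S' T' else 0) =
      (if S' = S then (\<Sum>T'\<in>Pow {..<p+q}. if T' = T then
        (if (S-T)\<union>(T-S) = U then blade_coeff p S T else 0) else 0) else 0)"
    proof (cases "S' = S")
      case True
      show ?thesis unfolding True
        apply (subst if_P[OF refl])
        apply (rule sum.cong[OF refl])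
        subgoal for T' by (cases "T' = T") (simp_all add: cl_blade_def)
        done
    next
      case False
      then show ?thesis by (subst if_not_P[OF False], intro sum.neutral ballI) (simp add: cl_blade_def)
    qed
  qed
  also have "\<dots> = (if (S-T)\<union>(T-S) = U then blade_coeff p S T else 0)"
    using assms by (simp add: sum.delta)
  finally show "cl_mult p q (cl_blade S) (cl_blade T) U = blade_coeff p S T * cl_blade ((S-T)\<union>(T-S)) U"
    by (auto simp: cl_blade_def)
qed

lemma blade_coeff_sq: "blade_coeff p S T * blade_coeff p S T = 1"
proof -
  have "(\<Prod>i\<in>S \<inter> T. - sgnpq p i) * (\<Prod>i\<in>S \<inter> T. - sgnpq p i) = (\<Prod>i\<in>S \<inter> T. (- sgnpq p i) * (- sgnpq p i))"
    by (rule prod.distrib[symmetric])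
  also have "\<dots> = 1" by (intro prod.neutral) (simp add: sgnpq_def)
  moreover have "((-1::real) ^ k) * ((-1) ^ k) = 1" for k :: nat
    by (metis power_add power_minus1_even mult_2[symmetric] even_mult_iff even_two_times_div_two dvd_triv_left)
  ultimately show ?thesis unfolding blade_coeff_def
    by (metis (no_types, lifting) mult.commute mult.left_commute mult_1)
qed


lemma cl_one_blade: "cl_one = cl_blade {}"
  by (auto simp: cl_one_def cl_blade_def)

lemma blade_Cl0: "S \<subseteq> {..<n} \<Longrightarrow> even (card S) \<Longrightarrow> cl_blade S \<in> Cl0 n"
  by (auto simp: Cl0_def Cl_def cl_blade_def)

lemma cl_vec_basis: "i < n \<Longrightarrow> cl_vec n (stdbasis i) = cl_blade {i}"
  by (auto simp: cl_vec_def cl_blade_def stdbasis_def fun_eq_iff)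

lemma sgn_sq: "sgnpq p i * sgnpq p i = 1" by (simp add: sgnpq_def)
lemma sgn_0: "0 < p \<Longrightarrow> sgnpq p 0 = 1" by (simp add: sgnpq_def)
lemma sgn_ne0: "sgnpq p i \<noteq> 0" by (simp add: sgnpq_def)

lemma ip_basis: "i < p + q \<Longrightarrow> ip p q (stdbasis i) z = sgnpq p i * z i"
proof -
  assume i: "i < p + q"
  have "ip p q (stdbasis i) z = (\<Sum>k<p+q. if k = i then sgnpq p i * z i else 0)"
    unfolding ip_def stdbasis_def by (intro sum.cong) auto
  also have "\<dots> = sgnpq p i * z i" using i by simp
  finally show ?thesis .
qed

lemma card_symdiff:
  assumes "finite S" "finite T"
  shows "card ((S - T) \<union> (T - S)) + 2 * card (S \<inter> T) = card S + card T"
proof -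
  have e: "(S - T) \<union> (T - S) = (S \<union> T) - (S \<inter> T)" by blast
  have c1: "card ((S \<union> T) - (S \<inter> T)) = card (S \<union> T) - card (S \<inter> T)"
    by (rule card_Diff_subset) (use assms in auto)
  have c2: "card (S \<inter> T) \<le> card (S \<union> T)" by (rule card_mono) (use assms in auto)
  have c3: "card (S \<union> T) + card (S \<inter> T) = card S + card T" using card_Un_Int[OF assms] by simp
  show ?thesis unfolding e c1 using c2 c3 by linarith
qed

lemma even_symdiff:
  assumes "finite S" "finite T" "even (card S)" "even (card T)"
  shows "even (card ((S - T) \<union> (T - S)))"
proof -
  have "even (card ((S - T) \<union> (T - S)) + 2 * card (S \<inter> T))"
    unfolding card_symdiff[OF assms(1,2)] using assms(3,4) by simp
  then show ?thesis by simp
qed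

lemma bc_single1: "i < j \<Longrightarrow> blade_coeff p {i} {j} = 1"
proof -
  assume ij: "i < j"
  have e: "{(s, t). s \<in> {i} \<and> t \<in> {j} \<and> t < s} = {}" using ij by auto
  show ?thesis unfolding blade_coeff_def e using ij by simp
qed

lemma bc_single2: "i < j \<Longrightarrow> blade_coeff p {j} {i} = -1"
proof -
  assume ij: "i < j"
  have "{(s, t). s \<in> {j} \<and> t \<in> {i} \<and> t < s} = {(j, i)}" using ij by auto
  then show ?thesis unfolding blade_coeff_def using ij by simp
qed

lemma bc_pair_sq: "0 < j \<Longrightarrow> 0 < p \<Longrightarrow> blade_coeff p {0, j} {0, j} = - sgnpq p j"
proof -
  assume j: "0 < j" and p: "0 < p"
  have "{(s, t). s \<in> {0, j} \<and> t \<in> {0, j} \<and> t < s} = {(j, 0::nat)}" using j by auto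
  moreover have "(\<Prod>i\<in>{0, j} \<inter> {0, j}. - sgnpq p i) = sgnpq p j"
    using j p by (simp add: sgn_0)
  ultimately show ?thesis unfolding blade_coeff_def by simp
qed

lemma bc_E1: "blade_coeff p {1..<2*r+1} {2*r+1, 2*r+2} = 1"
proof -
  have "{(s, t). s \<in> {1..<2*r+1} \<and> t \<in> {2*r+1, 2*r+2} \<and> t < s} = {}" by auto
  moreover have "{1..<2*r+1} \<inter> {2*r+1, 2*r+2} = {}" by auto
  ultimately show ?thesis unfolding blade_coeff_def by (simp only: card.empty power_0) simp
qed

lemma bc_E2: "blade_coeff p {2*r+1, 2*r+2} {1..<2*r+1} = 1"
proof -
  have "{(s, t). s \<in> {2*r+1, 2*r+2} \<and> t \<in> {1..<2*r+1} \<and> t < s} = {2*r+1, 2*r+2} \<times> {1..<2*r+1}" by auto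
  moreover have "card ({2*r+1, 2*r+2} \<times> {1..<2*r+1}) = 2 * (2 * r)" by (simp add: card_cartesian_product)
  moreover have "{2*r+1, 2*r+2} \<inter> {1..<2*r+1} = {}" by auto
  ultimately show ?thesis unfolding blade_coeff_def by simp
qed

lemma symdiff_E: "({1..<2*r+1} - {2*r+1, 2*r+2}) \<union> ({2*r+1, 2*r+2} - {1..<2*r+1}) = {1..<2*(Suc r)+1}"
  by auto



lemma riesz:
  fixes c :: "'w::euclidean_space \<Rightarrow> 'w \<Rightarrow> real"
  assumes lin1: "\<And>t. linear (\<lambda>s. c s t)" and lin2: "\<And>s. linear (\<lambda>t. c s t)"
    and U: "subspace U" and nd: "\<And>u. u \<in> U \<Longrightarrow> (\<forall>t\<in>U. c u t = 0) \<Longrightarrow> u = 0"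
  shows "\<exists>u\<in>U. \<forall>t\<in>U. c y t = c u t"
proof -
  obtain B where B: "B \<subseteq> U" "independent B" "U \<subseteq> span B" "card B = dim U"
    by (rule basis_exists)
  have fin: "finite B" using B(2) independent_explicit by blast
  have spanB: "span B = U"
    using B(1,3) span_mono[OF B(1)] U span_eq_iff by blast
  define \<phi> where "\<phi> y = (\<Sum>e\<in>B. c y e *\<^sub>R e)" for y
  have linphi: "linear \<phi>"
  proof (rule linearI)
    fix x y show "\<phi> (x + y) = \<phi> x + \<phi> y"
      unfolding \<phi>_def by (simp add: linear_add[OF lin1] scaleR_add_left sum.distrib)
  next
    fix r x show "\<phi> (r *\<^sub>R x) = r *\<^sub>R \<phi> x"
      unfolding \<phi>_def by (simp add: linear_scale[OF lin1] scaleR_sum_right)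
  qed
  have key: "\<forall>t\<in>U. c x t = c y t" if "\<phi> x = \<phi> y" for x y
  proof -
    have "(\<Sum>e\<in>B. (c x e - c y e) *\<^sub>R e) = 0"
      using that unfolding \<phi>_def by (simp add: scaleR_diff_left sum_subtractf)
    then have eB: "\<forall>e\<in>B. c x e - c y e = 0"
      using B(2) unfolding independent_explicit
      by (elim conjE allE[of _ "\<lambda>e. c x e - c y e"]) blast
    show ?thesis
    proof
      fix t assume "t \<in> U"
      then have "t \<in> span B" using spanB by simp
      then show "c x t = c y t"
      proof (rule span_induct)
        show "subspace {t. c x t = c y t}"
          unfolding subspace_def
          by (simp add: linear_add[OF lin2] linear_scale[OF lin2] linear_0[OF lin2])
        show "\<And>e. e \<in> B \<Longrightarrow> c x e = c y e" using eB by simp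
      qed
    qed
  qed
  have inj: "inj_on \<phi> U"
  proof (rule inj_onI)
    fix x y assume xy: "x \<in> U" "y \<in> U" "\<phi> x = \<phi> y"
    have "\<forall>t\<in>U. c (x - y) t = 0"
      using key[OF xy(3)] by (simp add: linear_diff[OF lin1])
    then have "x - y = 0" using nd[of "x - y"] U xy subspace_diff by blast
    then show "x = y" by simp
  qed
  have sub: "\<phi> ` U \<subseteq> U"
  proof
    fix z assume "z \<in> \<phi> ` U"
    then obtain y where "z = \<phi> y" by blast
    then show "z \<in> U" unfolding \<phi>_def
      using B(1) U by (auto intro!: subspace_sum subspace_scale)
  qed
  have "dim (\<phi> ` U) = dim U"
    using dim_image_eq[OF linphi] inj U span_eq_iff by metis
  then have "\<phi> ` U = U"
    using subspace_dim_equal[OF linear_subspace_image[OF linphi U] U sub] by simp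
  moreover have "\<phi> y \<in> U" using sub spanB unfolding \<phi>_def
    using B(1) U by (auto intro!: subspace_sum subspace_scale)
  ultimately obtain u where "u \<in> U" "\<phi> u = \<phi> y" by (metis imageE)
  then show ?thesis using key[of y u] by auto
qed



locale decomp =
  fixes sm :: "'w::euclidean_space set \<Rightarrow> bool" and b :: "'w \<Rightarrow> 'w \<Rightarrow> real"
  assumes sm_sub: "sm U \<Longrightarrow> subspace U"
    and sm_Int: "sm U \<Longrightarrow> sm V \<Longrightarrow> sm (U \<inter> V)"
    and sm_sum: "sm U \<Longrightarrow> sm V \<Longrightarrow> sm {u + v | u v. u \<in> U \<and> v \<in> V}"
    and sm_orth: "sm U \<Longrightarrow> sm {t. \<forall>s\<in>U. b s t = 0}"
    and sm_UNIV: "sm UNIV"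
    and sm_compl: "sm U \<Longrightarrow> sm Y \<Longrightarrow> U \<subseteq> Y \<Longrightarrow>
       \<exists>C. sm C \<and> C \<subseteq> Y \<and> U \<inter> C = {0} \<and> (\<forall>y\<in>Y. \<exists>u\<in>U. \<exists>c\<in>C. y = u + c)"
    and b_lin: "linear (\<lambda>s. b s t)"
    and b_sym: "b s t = b t s"
begin

definition irr :: "'w set \<Rightarrow> bool" where
  "irr U \<longleftrightarrow> sm U \<and> U \<noteq> {0} \<and> (\<forall>U'. sm U' \<and> U' \<subseteq> U \<longrightarrow> U' = {0} \<or> U' = U)"

definition nondeg :: "'w set \<Rightarrow> bool" where
  "nondeg Y \<longleftrightarrow> (\<forall>s\<in>Y. (\<forall>t\<in>Y. b s t = 0) \<longrightarrow> s = 0)"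

definition iso :: "'w set \<Rightarrow> bool" where
  "iso U \<longleftrightarrow> (\<forall>s\<in>U. \<forall>t\<in>U. b s t = 0)"

definition orth :: "'w set \<Rightarrow> 'w set" where
  "orth U = {t. \<forall>s\<in>U. b s t = 0}"

definition hyp :: "'w set \<Rightarrow> bool" where
  "hyp H \<longleftrightarrow> (\<exists>X X'. irr X \<and> irr X' \<and> iso X \<and> iso X' \<and> X \<inter> X' = {0} \<and>
      H = {x + x' | x x'. x \<in> X \<and> x' \<in> X'})"

lemma b_lin2: "linear (\<lambda>t. b s t)"
  using b_lin[of s] by (simp add: b_sym)

lemma b_add1: "b (x + y) t = b x t + b y t" using linear_add[OF b_lin] .
lemma b_add2: "b s (x + y) = b s x + b s y" using linear_add[OF b_lin2] .
lemma b_diff1: "b (x - y) t = b x t - b y t" using linear_diff[OF b_lin] .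
lemma b_diff2: "b s (x - y) = b s x - b s y" using linear_diff[OF b_lin2] .
lemma b_zero1: "b 0 t = 0" using linear_0[OF b_lin] .
lemma b_zero2: "b s 0 = 0" using linear_0[OF b_lin2] .
lemma b_sum1: "b (\<Sum>i\<in>I. f i) t = (\<Sum>i\<in>I. b (f i) t)"
  using linear_sum[OF b_lin] .

lemma sm_orth': "sm U \<Longrightarrow> sm (orth U)" unfolding orth_def by (rule sm_orth)

lemma exists_irr:
  assumes "sm Y" "Y \<noteq> {0}"
  shows "\<exists>U. irr U \<and> U \<subseteq> Y"
proof -
  define P where "P d \<longleftrightarrow> (\<exists>U. sm U \<and> U \<subseteq> Y \<and> U \<noteq> {0} \<and> dim U = d)" for d
  have "P (dim Y)" using assms unfolding P_def by blast
  then obtain d where d: "P d" "\<And>d'. P d' \<Longrightarrow> d \<le> d'"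
    using ex_has_least_nat[of P "dim Y" id] by auto
  then obtain U where U: "sm U" "U \<subseteq> Y" "U \<noteq> {0}" "dim U = d" unfolding P_def by blast
  have "irr U" unfolding irr_def
  proof (intro conjI allI impI U(1,3))
    fix U' assume U': "sm U' \<and> U' \<subseteq> U"
    show "U' = {0} \<or> U' = U"
    proof (cases "U' = {0}")
      case False
      then have "P (dim U')" unfolding P_def using U' U(2) by blast
      then have "dim U \<le> dim U'" using d(2) U(4) by simp
      then show ?thesis using subspace_dim_equal[of U' U] U' U(1) sm_sub by blast
    qed simp
  qed
  then show ?thesis using U(2) by blast
qed

lemma split:
  assumes U: "sm U" and ndU: "nondeg U" and y: "y \<in> Y" and UY: "U \<subseteq> Y" and Y: "sm Y"
  shows "\<exists>u\<in>U. y - u \<in> Y \<inter> orth U"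
proof -
  obtain u where u: "u \<in> U" "\<forall>t\<in>U. b y t = b u t"
    using riesz[of b U y] b_lin b_lin2 sm_sub[OF U] ndU unfolding nondeg_def by blast
  have "y - u \<in> Y" using y u(1) UY sm_sub[OF Y] subspace_diff by blast
  moreover have "y - u \<in> orth U" unfolding orth_def
  proof
    show "\<forall>s\<in>U. b s (y - u) = 0"
    proof
      fix s assume "s \<in> U"
      have "b s (y - u) = b (y - u) s" by (rule b_sym)
      also have "\<dots> = b y s - b u s" by (rule b_diff1)
      finally show "b s (y - u) = 0" using u(2) \<open>s \<in> U\<close> by simp
    qed
  qed
  ultimately show ?thesis using u(1) by blast
qed

lemma nondeg_orth:
  assumes U: "sm U" and ndU: "nondeg U" and UY: "U \<subseteq> Y" and Y: "sm Y" and ndY: "nondeg Y"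
  shows "nondeg (Y \<inter> orth U)"
  unfolding nondeg_def
proof (intro ballI impI)
  fix s assume s: "s \<in> Y \<inter> orth U" and st: "\<forall>t\<in>Y \<inter> orth U. b s t = 0"
  have "\<forall>y\<in>Y. b s y = 0"
  proof
    fix y assume y: "y \<in> Y"
    obtain u where u: "u \<in> U" "y - u \<in> Y \<inter> orth U" using split[OF U ndU y UY Y] by blast
    have "b u s = 0" using s u(1) unfolding orth_def by blast
    then have "b s u = 0" using b_sym[of s u] by simp
    moreover have "b s (y - u) = 0" using st u(2) by blast
    ultimately show "b s y = 0" by (simp add: b_diff2)
  qed
  then show "s = 0" using ndY s unfolding nondeg_def by blast
qed

lemma dim_less:
  assumes U: "sm U" and ndU: "nondeg U" and UY: "U \<subseteq> Y" and Y: "sm Y" and U0: "U \<noteq> {0}"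
  shows "dim (Y \<inter> orth U) < dim Y"
proof -
  obtain u where u: "u \<in> U" "u \<noteq> 0" using U0 sm_sub[OF U] subspace_0 by blast
  have "u \<notin> orth U"
  proof
    assume "u \<in> orth U"
    then have "\<forall>t\<in>U. b u t = 0" unfolding orth_def using b_sym[of u] by auto
    then show False using ndU u unfolding nondeg_def by blast
  qed
  then have "Y \<inter> orth U \<subset> Y" using u UY by blast
  moreover have "subspace (Y \<inter> orth U)" using sm_sub sm_Int[OF Y sm_orth'[OF U]] by blast
  ultimately show ?thesis
    using dim_psubset[of "Y \<inter> orth U" Y] sm_sub[OF Y] span_eq_iff by metis
qed


lemma irr_nondeg:
  assumes "irr U" "\<not> iso U"
  shows "nondeg U"
proof -
  have smU: "sm U" using assms(1) irr_def by blast
  have "sm (U \<inter> orth U)" using sm_Int[OF smU sm_orth'[OF smU]] .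
  then have "U \<inter> orth U = {0} \<or> U \<inter> orth U = U" using assms(1) unfolding irr_def by blast
  moreover have "U \<inter> orth U \<noteq> U"
  proof
    assume "U \<inter> orth U = U"
    then have "iso U" unfolding iso_def orth_def by blast
    then show False using assms(2) by simp
  qed
  ultimately have rad: "U \<inter> orth U = {0}" by simp
  show ?thesis unfolding nondeg_def
  proof (intro ballI impI)
    fix s assume s: "s \<in> U" "\<forall>t\<in>U. b s t = 0"
    then have "s \<in> orth U" unfolding orth_def using b_sym[of _ s] by auto
    then show "s = 0" using rad s(1) by blast
  qed
qed

lemma phase1:
  assumes "sm Y" "nondeg Y"
  shows "\<exists>Ls Z. (\<forall>L\<in>set Ls. irr L \<and> nondeg L \<and> L \<subseteq> Y) \<and> sm Z \<and> Z \<subseteq> Y \<and> nondeg Z \<and>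
    (\<forall>U. irr U \<and> U \<subseteq> Z \<longrightarrow> iso U) \<and>
    (\<forall>i<length Ls. \<forall>j<length Ls. i \<noteq> j \<longrightarrow> (\<forall>s\<in>Ls!i. \<forall>t\<in>Ls!j. b s t = 0)) \<and>
    (\<forall>L\<in>set Ls. \<forall>s\<in>L. \<forall>t\<in>Z. b s t = 0) \<and>
    (\<forall>y\<in>Y. \<exists>f. (\<forall>i<length Ls. f i \<in> Ls!i) \<and> y - (\<Sum>i<length Ls. f i) \<in> Z)"
  using assms
proof (induction "dim Y" arbitrary: Y rule: less_induct)
  case less
  show ?case
  proof (cases "\<forall>U. irr U \<and> U \<subseteq> Y \<longrightarrow> iso U")
    case True
    show ?thesis
    proof (rule exI[of _ "[]"], rule exI[of _ Y], intro conjI)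
      show "\<forall>y\<in>Y. \<exists>f. (\<forall>i<length ([]::'w set list). f i \<in> [] ! i) \<and> y - (\<Sum>i<length ([]::'w set list). f i) \<in> Y"
        by simp
    qed (use True less.prems in simp_all)
  next
    case False
    then obtain U where U: "irr U" "U \<subseteq> Y" "\<not> iso U" by blast
    have smU: "sm U" using U(1) irr_def by blast
    have ndU: "nondeg U" using irr_nondeg U by blast
    have U0: "U \<noteq> {0}" using U(1) irr_def by blast
    define Y' where "Y' = Y \<inter> orth U"
    have smY': "sm Y'" unfolding Y'_def using sm_Int[OF less.prems(1) sm_orth'[OF smU]] .
    have ndY': "nondeg Y'" unfolding Y'_def using nondeg_orth[OF smU ndU U(2) less.prems] .
    have dY': "dim Y' < dim Y" unfolding Y'_def using dim_less[OF smU ndU U(2) less.prems(1) U0] .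
    obtain Ls Z where IH1: "\<forall>L\<in>set Ls. irr L \<and> nondeg L \<and> L \<subseteq> Y'" and IH2: "sm Z" and IH3: "Z \<subseteq> Y'"
      and IH4: "nondeg Z" and IH5: "\<forall>U. irr U \<and> U \<subseteq> Z \<longrightarrow> iso U"
      and IH6: "\<forall>i<length Ls. \<forall>j<length Ls. i \<noteq> j \<longrightarrow> (\<forall>s\<in>Ls!i. \<forall>t\<in>Ls!j. b s t = 0)"
      and IH7: "\<forall>L\<in>set Ls. \<forall>s\<in>L. \<forall>t\<in>Z. b s t = 0"
      and IH8: "\<forall>y\<in>Y'. \<exists>f. (\<forall>i<length Ls. f i \<in> Ls!i) \<and> y - (\<Sum>i<length Ls. f i) \<in> Z"
      using less.hyps[OF dY' smY' ndY'] by (elim exE conjE) (rule that)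
    have Y'Y: "Y' \<subseteq> Y" and Y'U: "Y' \<subseteq> orth U" unfolding Y'_def by auto
    have orthU: "b s t = 0" if "s \<in> U" "t \<in> Y'" for s t
      using that Y'U unfolding orth_def by blast
    have orthU': "b t s = 0" if "s \<in> U" "t \<in> Y'" for s t
      using orthU[OF that] b_sym[of t s] by simp
    show ?thesis
    proof (rule exI[of _ "U # Ls"], rule exI[of _ Z], intro conjI)
      show "\<forall>L\<in>set (U # Ls). irr L \<and> nondeg L \<and> L \<subseteq> Y" using IH1 U ndU Y'Y by auto
      show "sm Z" "nondeg Z" "\<forall>U. irr U \<and> U \<subseteq> Z \<longrightarrow> iso U" using IH2 IH4 IH5 by auto
      show "Z \<subseteq> Y" using IH3 Y'Y by auto
      show "\<forall>i<length (U # Ls). \<forall>j<length (U # Ls). i \<noteq> j \<longrightarrow>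
          (\<forall>s\<in>(U # Ls) ! i. \<forall>t\<in>(U # Ls) ! j. b s t = 0)"
      proof (intro allI impI ballI)
        fix i j s t assume ij: "i < length (U # Ls)" "j < length (U # Ls)" "i \<noteq> j"
          and s: "s \<in> (U # Ls) ! i" and t: "t \<in> (U # Ls) ! j"
        show "b s t = 0"
        proof (cases i)
          case 0
          then obtain j' where j': "j = Suc j'" "j' < length Ls" using ij by (cases j) auto
          then have "t \<in> Y'" using t IH1 nth_mem[OF j'(2)] by auto
          then show ?thesis using orthU s 0 by simp
        next
          case (Suc i')
          then have i': "i' < length Ls" using ij by simp
          then have sY: "s \<in> Y'" using s IH1 Suc nth_mem[OF i'] by auto
          show ?thesis
          proof (cases j)
            case 0
            then show ?thesis using orthU' sY t by simp
          next
            case (Suc j')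
            then show ?thesis using IH6 ij s t \<open>i = Suc i'\<close> by auto
          qed
        qed
      qed
      show "\<forall>L\<in>set (U # Ls). \<forall>s\<in>L. \<forall>t\<in>Z. b s t = 0"
      proof (intro ballI)
        fix L s t assume L: "L \<in> set (U # Ls)" and s: "s \<in> L" and t: "t \<in> Z"
        show "b s t = 0"
        proof (cases "L = U")
          case True then show ?thesis using orthU s t IH3 by auto
        next
          case False then show ?thesis using L IH7 s t by auto
        qed
      qed
      show "\<forall>y\<in>Y. \<exists>f. (\<forall>i<length (U # Ls). f i \<in> (U # Ls) ! i) \<and> y - (\<Sum>i<length (U # Ls). f i) \<in> Z"
      proof
        fix y assume y: "y \<in> Y"
        obtain u where u: "u \<in> U" "y - u \<in> Y'"
          using split[OF smU ndU y U(2) less.prems(1)] Y'_def by blast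
        obtain f where f: "\<forall>i<length Ls. f i \<in> Ls!i" "(y - u) - (\<Sum>i<length Ls. f i) \<in> Z"
          using IH8 u(2) by blast
        define g where "g = case_nat u f"
        have "(\<Sum>i<length (U # Ls). g i) = u + (\<Sum>i<length Ls. f i)"
          unfolding g_def by (simp only: length_Cons sum.lessThan_Suc_shift nat.case)
        moreover have "\<forall>i<length (U # Ls). g i \<in> (U # Ls) ! i"
          using f(1) u(1) unfolding g_def by (auto split: nat.split)
        ultimately show "\<exists>f. (\<forall>i<length (U # Ls). f i \<in> (U # Ls) ! i) \<and> y - (\<Sum>i<length (U # Ls). f i) \<in> Z"
          using f(2) by (intro exI[of _ g]) (simp add: algebra_simps)
      qed
    qed
  qed
qed


lemma phase2:
  assumes "sm Z" "nondeg Z" "\<forall>U. irr U \<and> U \<subseteq> Z \<longrightarrow> iso U"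
  shows "\<exists>Hs. (\<forall>H\<in>set Hs. sm H \<and> H \<subseteq> Z \<and> nondeg H \<and> hyp H) \<and>
    (\<forall>i<length Hs. \<forall>j<length Hs. i \<noteq> j \<longrightarrow> (\<forall>s\<in>Hs!i. \<forall>t\<in>Hs!j. b s t = 0)) \<and>
    (\<forall>z\<in>Z. \<exists>f. (\<forall>i<length Hs. f i \<in> Hs!i) \<and> z = (\<Sum>i<length Hs. f i))"
  using assms
proof (induction "dim Z" arbitrary: Z rule: less_induct)
  case less
  note smZ = less.prems(1) and ndZ = less.prems(2) and isoZ = less.prems(3)
  have subZ: "subspace Z" using sm_sub[OF smZ] .
  show ?case
  proof (cases "Z = {0}")
    case True
    show ?thesis
    proof (rule exI[of _ "[]"], intro conjI)
      show "\<forall>z\<in>Z. \<exists>f. (\<forall>i<length ([]::'w set list). f i \<in> [] ! i) \<and> z = (\<Sum>i<length ([]::'w set list). f i)"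
        using True by simp
    qed simp_all
  next
    case False
    obtain X where X: "irr X" "X \<subseteq> Z" using exists_irr[OF smZ False] by blast
    have smX: "sm X" and X0: "X \<noteq> {0}" using X(1) irr_def by auto
    have isoX: "iso X" using isoZ X by blast
    define K where "K = Z \<inter> orth X"
    have smK: "sm K" unfolding K_def using sm_Int[OF smZ sm_orth'[OF smX]] .
    have KZ: "K \<subseteq> Z" unfolding K_def by blast
    obtain C where C: "sm C" "C \<subseteq> Z" "K \<inter> C = {0}" "\<forall>y\<in>Z. \<exists>u\<in>K. \<exists>c\<in>C. y = u + c"
      using sm_compl[OF smK smZ KZ] by (elim exE conjE) (rule that)
    have C0: "C \<noteq> {0}"
    proof
      assume C0: "C = {0}"
      obtain x where x: "x \<in> X" "x \<noteq> 0" using X0 sm_sub[OF smX] subspace_0 by blast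
      have "\<forall>t\<in>Z. b x t = 0"
      proof
        fix t assume "t \<in> Z"
        then obtain u c where "u \<in> K" "c \<in> C" "t = u + c" using C(4) by blast
        then have "t \<in> K" using C0 by simp
        then show "b x t = 0" using x(1) unfolding K_def orth_def by blast
      qed
      then show False using ndZ x X(2) unfolding nondeg_def by blast
    qed
    obtain X' where X': "irr X'" "X' \<subseteq> C" using exists_irr[OF C(1) C0] by blast
    have smX': "sm X'" and X'0: "X' \<noteq> {0}" using X'(1) irr_def by auto
    have isoX': "iso X'" using isoZ X' C(2) by blast
    have rk: "x' = 0" if "x' \<in> X'" "\<forall>x\<in>X. b x x' = 0" for x'
    proof -
      have "x' \<in> K" unfolding K_def orth_def using that X' C(2) by blast
      then show ?thesis using C(3) X'(2) that(1) by blast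
    qed
    have lk: "x = 0" if "x \<in> X" "\<forall>x'\<in>X'. b x x' = 0" for x
    proof -
      have smL: "sm (X \<inter> orth X')" using sm_Int[OF smX sm_orth'[OF smX']] .
      then have "X \<inter> orth X' = {0} \<or> X \<inter> orth X' = X" using X(1) unfolding irr_def by blast
      moreover have "X \<inter> orth X' \<noteq> X"
      proof
        assume XX: "X \<inter> orth X' = X"
        have "\<forall>x'\<in>X'. x' = 0"
        proof
          fix x' assume x': "x' \<in> X'"
          have "\<forall>x\<in>X. b x x' = 0"
          proof
            fix x assume "x \<in> X"
            then have "x \<in> orth X'" using XX by blast
            then have "b x' x = 0" using x' unfolding orth_def by blast
            then show "b x x' = 0" using b_sym[of x x'] by simp
          qed
          then show "x' = 0" using rk x' by blast
        qed
        then show False using X'0 sm_sub[OF smX'] subspace_0 by blast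
      qed
      ultimately have L0: "X \<inter> orth X' = {0}" by simp
      have "x \<in> orth X'" unfolding orth_def using that(2) b_sym[of _ x] by auto
      then show ?thesis using L0 that(1) by blast
    qed
    have XX': "X \<inter> X' = {0}"
    proof
      show "X \<inter> X' \<subseteq> {0}"
      proof
        fix v assume v: "v \<in> X \<inter> X'"
        have "\<forall>x\<in>X. b x v = 0" using isoX v unfolding iso_def by blast
        then show "v \<in> {0}" using rk v by blast
      qed
      show "{0} \<subseteq> X \<inter> X'" using sm_sub[OF smX] sm_sub[OF smX'] subspace_0 by blast
    qed
    define H where "H = {x + x' | x x'. x \<in> X \<and> x' \<in> X'}"
    have smH: "sm H" unfolding H_def using sm_sum[OF smX smX'] .
    have HZ: "H \<subseteq> Z" unfolding H_def using X(2) X'(2) C(2) subZ subspace_add by blast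
    have hypH: "hyp H" unfolding hyp_def H_def using X(1) X'(1) isoX isoX' XX' by blast
    have ndH: "nondeg H" unfolding nondeg_def
    proof (intro ballI impI)
      fix h assume h: "h \<in> H" and hH: "\<forall>t\<in>H. b h t = 0"
      then obtain x x' where xx: "x \<in> X" "x' \<in> X'" "h = x + x'" unfolding H_def by blast
      have "\<forall>y\<in>X. b y x' = 0"
      proof
        fix y assume y: "y \<in> X"
        then have "y + 0 \<in> H" unfolding H_def using sm_sub[OF smX'] subspace_0 by blast
        then have "b h y = 0" using hH by simp
        moreover have "b x y = 0" using isoX xx(1) y unfolding iso_def by blast
        ultimately show "b y x' = 0" using xx(3) b_add1 b_sym[of y x'] by simp
      qed
      then have x'0: "x' = 0" using rk xx(2) by blast
      have "\<forall>y\<in>X'. b x y = 0"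
      proof
        fix y assume y: "y \<in> X'"
        then have "0 + y \<in> H" unfolding H_def using sm_sub[OF smX] subspace_0 by blast
        then have "b h y = 0" using hH by simp
        then show "b x y = 0" using xx(3) x'0 by simp
      qed
      then have "x = 0" using lk xx(1) by blast
      then show "h = 0" using xx(3) x'0 by simp
    qed
    have H0: "H \<noteq> {0}"
    proof
      assume "H = {0}"
      moreover obtain x where x: "x \<in> X" "x \<noteq> 0" using X0 sm_sub[OF smX] subspace_0 by blast
      moreover have "x + 0 \<in> H" unfolding H_def using x(1) sm_sub[OF smX'] subspace_0 by blast
      ultimately show False by simp
    qed
    define Z' where "Z' = Z \<inter> orth H"
    have smZ': "sm Z'" unfolding Z'_def using sm_Int[OF smZ sm_orth'[OF smH]] .
    have ndZ': "nondeg Z'" unfolding Z'_def using nondeg_orth[OF smH ndH HZ smZ ndZ] .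
    have dZ': "dim Z' < dim Z" unfolding Z'_def using dim_less[OF smH ndH HZ smZ H0] .
    have isoZ': "\<forall>U. irr U \<and> U \<subseteq> Z' \<longrightarrow> iso U" using isoZ unfolding Z'_def by blast
    obtain Hs where IH1: "\<forall>H\<in>set Hs. sm H \<and> H \<subseteq> Z' \<and> nondeg H \<and> hyp H"
      and IH2: "\<forall>i<length Hs. \<forall>j<length Hs. i \<noteq> j \<longrightarrow> (\<forall>s\<in>Hs!i. \<forall>t\<in>Hs!j. b s t = 0)"
      and IH3: "\<forall>z\<in>Z'. \<exists>f. (\<forall>i<length Hs. f i \<in> Hs!i) \<and> z = (\<Sum>i<length Hs. f i)"
      using less.hyps[OF dZ' smZ' ndZ' isoZ'] by (elim exE conjE) (rule that)
    have Z'Z: "Z' \<subseteq> Z" and Z'H: "Z' \<subseteq> orth H" unfolding Z'_def by auto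
    have orthH: "b s t = 0" if "s \<in> H" "t \<in> Z'" for s t
      using that Z'H unfolding orth_def by blast
    have orthH': "b t s = 0" if "s \<in> H" "t \<in> Z'" for s t
      using orthH[OF that] b_sym[of t s] by simp
    show ?thesis
    proof (rule exI[of _ "H # Hs"], intro conjI)
      show "\<forall>L\<in>set (H # Hs). sm L \<and> L \<subseteq> Z \<and> nondeg L \<and> hyp L"
        using IH1 smH HZ ndH hypH Z'Z by auto
      show "\<forall>i<length (H # Hs). \<forall>j<length (H # Hs). i \<noteq> j \<longrightarrow>
          (\<forall>s\<in>(H # Hs) ! i. \<forall>t\<in>(H # Hs) ! j. b s t = 0)"
      proof (intro allI impI ballI)
        fix i j s t assume ij: "i < length (H # Hs)" "j < length (H # Hs)" "i \<noteq> j"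
          and s: "s \<in> (H # Hs) ! i" and t: "t \<in> (H # Hs) ! j"
        show "b s t = 0"
        proof (cases i)
          case 0
          then obtain j' where j': "j = Suc j'" "j' < length Hs" using ij by (cases j) auto
          then have "t \<in> Z'" using t IH1 nth_mem[OF j'(2)] by auto
          then show ?thesis using orthH s 0 by simp
        next
          case (Suc i')
          then have i': "i' < length Hs" using ij by simp
          then have sY: "s \<in> Z'" using s IH1 Suc nth_mem[OF i'] by auto
          show ?thesis
          proof (cases j)
            case 0
            then show ?thesis using orthH' sY t by simp
          next
            case (Suc j')
            then show ?thesis using IH2 ij s t \<open>i = Suc i'\<close> by auto
          qed
        qed
      qed
      show "\<forall>z\<in>Z. \<exists>f. (\<forall>i<length (H # Hs). f i \<in> (H # Hs) ! i) \<and> z = (\<Sum>i<length (H # Hs). f i)"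
      proof
        fix z assume z: "z \<in> Z"
        obtain h where h: "h \<in> H" "z - h \<in> Z'"
          using split[OF smH ndH z HZ smZ] Z'_def by blast
        obtain f where f: "\<forall>i<length Hs. f i \<in> Hs!i" "z - h = (\<Sum>i<length Hs. f i)"
          using IH3 h(2) by blast
        define g where "g = case_nat h f"
        have "(\<Sum>i<length (H # Hs). g i) = h + (\<Sum>i<length Hs. f i)"
          unfolding g_def by (simp only: length_Cons sum.lessThan_Suc_shift nat.case)
        moreover have "\<forall>i<length (H # Hs). g i \<in> (H # Hs) ! i"
          using f(1) h(1) unfolding g_def by (auto split: nat.split)
        ultimately show "\<exists>f. (\<forall>i<length (H # Hs). f i \<in> (H # Hs) ! i) \<and> z = (\<Sum>i<length (H # Hs). f i)"
          using f(2) by (intro exI[of _ g]) (simp add: algebra_simps)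
      qed
    qed
  qed
qed


lemma abstract_main:
  "\<exists>(l::nat) (m::nat) Ws. (\<forall>i\<le>l+m. sm (Ws i)) \<and>
     (\<forall>w. \<exists>f. (\<forall>i\<le>l+m. f i \<in> Ws i) \<and> w = (\<Sum>i\<le>l+m. f i)) \<and>
     (\<forall>f. (\<forall>i\<le>l+m. f i \<in> Ws i) \<and> (\<Sum>i\<le>l+m. f i) = 0 \<longrightarrow> (\<forall>i\<le>l+m. f i = 0)) \<and>
     (\<forall>i\<le>l+m. \<forall>j\<le>l+m. i \<noteq> j \<longrightarrow> (\<forall>s\<in>Ws i. \<forall>t\<in>Ws j. b s t = 0)) \<and>
     Ws 0 = {s. \<forall>t. b s t = 0} \<and>
     (\<forall>i\<in>{1..l+m}. nondeg (Ws i)) \<and>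
     (\<forall>i\<in>{1..l}. irr (Ws i)) \<and>
     (\<forall>j\<in>{l+1..l+m}. hyp (Ws j)) \<and>
     (\<forall>U. irr U \<and> U \<subseteq> {\<Sum>j\<in>{l+1..l+m}. f j | f. \<forall>j\<in>{l+1..l+m}. f j \<in> Ws j} \<longrightarrow> iso U)"
proof -
  define W0 where "W0 = {s. \<forall>t. b s t = 0}"
  have W0o: "W0 = orth UNIV" unfolding W0_def orth_def using b_sym by auto
  have smW0: "sm W0" unfolding W0o using sm_orth'[OF sm_UNIV] .
  obtain Y where Y: "sm Y" "W0 \<inter> Y = {0}" "\<forall>w. \<exists>k\<in>W0. \<exists>y\<in>Y. w = k + y"
    using sm_compl[OF smW0 sm_UNIV subset_UNIV] by (elim exE conjE) (rule that, auto)
  have ndY: "nondeg Y" unfolding nondeg_def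
  proof (intro ballI impI)
    fix y assume y: "y \<in> Y" and yY: "\<forall>t\<in>Y. b y t = 0"
    have "\<forall>w. b y w = 0"
    proof
      fix w
      obtain k y' where ky: "k \<in> W0" "y' \<in> Y" "w = k + y'" using Y(3) by blast
      have "b y k = 0" using ky(1) b_sym[of y k] unfolding W0_def by simp
      then show "b y w = 0" using ky yY b_add2 by simp
    qed
    then have "y \<in> W0" unfolding W0_def by simp
    then show "y = 0" using Y(2) y by blast
  qed
  obtain Ls Z where P1: "\<forall>L\<in>set Ls. irr L \<and> nondeg L \<and> L \<subseteq> Y" and smZ: "sm Z" and ZY: "Z \<subseteq> Y"
    and ndZ: "nondeg Z" and isoZ: "\<forall>U. irr U \<and> U \<subseteq> Z \<longrightarrow> iso U"
    and P6: "\<forall>i<length Ls. \<forall>j<length Ls. i \<noteq> j \<longrightarrow> (\<forall>s\<in>Ls!i. \<forall>t\<in>Ls!j. b s t = 0)"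
    and P7: "\<forall>L\<in>set Ls. \<forall>s\<in>L. \<forall>t\<in>Z. b s t = 0"
    and P8: "\<forall>y\<in>Y. \<exists>f. (\<forall>i<length Ls. f i \<in> Ls!i) \<and> y - (\<Sum>i<length Ls. f i) \<in> Z"
    using phase1[OF Y(1) ndY] by (elim exE conjE) (rule that)
  obtain Hs where Q1: "\<forall>H\<in>set Hs. sm H \<and> H \<subseteq> Z \<and> nondeg H \<and> hyp H"
    and Q2: "\<forall>i<length Hs. \<forall>j<length Hs. i \<noteq> j \<longrightarrow> (\<forall>s\<in>Hs!i. \<forall>t\<in>Hs!j. b s t = 0)"
    and Q3: "\<forall>z\<in>Z. \<exists>f. (\<forall>i<length Hs. f i \<in> Hs!i) \<and> z = (\<Sum>i<length Hs. f i)"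
    using phase2[OF smZ ndZ isoZ] by (elim exE conjE) (rule that)
  define l where "l = length Ls"
  define m where "m = length Hs"
  define Ws where "Ws i = (if i = 0 then W0 else if i \<le> l then Ls!(i-1) else Hs!(i-l-1))" for i
  have Ws0: "Ws 0 = W0" unfolding Ws_def by simp
  have WsL: "Ws i = Ls!(i-1)" "i - 1 < length Ls" if "1 \<le> i" "i \<le> l" for i
    using that unfolding Ws_def l_def by auto
  have WsH: "Ws i = Hs!(i-l-1)" "i - l - 1 < length Hs" if "l < i" "i \<le> l + m" for i
    using that unfolding Ws_def m_def by auto
  have Lprop: "irr (Ws i) \<and> nondeg (Ws i) \<and> Ws i \<subseteq> Y \<and> (\<forall>s\<in>Ws i. \<forall>t\<in>Z. b s t = 0)"
    if "1 \<le> i" "i \<le> l" for i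
    using WsL[OF that] P1 P7 nth_mem by metis
  have Hprop: "sm (Ws i) \<and> Ws i \<subseteq> Z \<and> nondeg (Ws i) \<and> hyp (Ws i)" if "l < i" "i \<le> l + m" for i
    using WsH[OF that] Q1 nth_mem by metis
  have smWs: "sm (Ws i)" if iH: "i \<le> l + m" for i
  proof -
    consider "i = 0" | "1 \<le> i" "i \<le> l" | "l < i" "i \<le> l + m" using iH by (cases "i = 0"; cases "i \<le> l"; simp)
    then show ?thesis
    proof cases
      case 1 then show ?thesis using Ws0 smW0 by simp
    next
      case 2 then show ?thesis using Lprop irr_def by blast
    next
      case 3 then show ?thesis using Hprop by blast
    qed
  qed
  have ndWs: "nondeg (Ws i)" if "1 \<le> i" "i \<le> l + m" for i
  proof (cases "i \<le> l")
    case True then show ?thesis using Lprop that by blast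
  next
    case False then show ?thesis using Hprop that by simp
  qed
  have orthWs: "b s t = 0" if ij: "i \<le> l+m" "j \<le> l+m" "i \<noteq> j" and st: "s \<in> Ws i" "t \<in> Ws j" for i j s t
  proof -
    have gen: "b s t = 0" if ij: "i \<le> l+m" "j \<le> l+m" "i \<noteq> j" "i \<le> j" and st: "s \<in> Ws i" "t \<in> Ws j" for i j s t
    proof -
      consider "i = 0" | "1 \<le> i" "j \<le> l" | "1 \<le> i" "i \<le> l" "l < j" | "l < i" using ij by (cases "i = 0"; cases "i \<le> l"; cases "j \<le> l"; simp)
      then show ?thesis
      proof cases
        case 1 then show ?thesis using st Ws0 unfolding W0_def by simp
      next
        case 2
        have "s \<in> Ls!(i-1)" "t \<in> Ls!(j-1)" "i - 1 < length Ls" "j - 1 < length Ls" "i - 1 \<noteq> j - 1"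
          using WsL[of i] WsL[of j] 2 ij st by auto
        then show ?thesis using P6 by blast
      next
        case 3
        have "t \<in> Z" using Hprop[of j] 3 ij st by blast
        then show ?thesis using Lprop[of i] 3 st by blast
      next
        case 4
        have "s \<in> Hs!(i-l-1)" "t \<in> Hs!(j-l-1)" "i-l-1 < length Hs" "j-l-1 < length Hs" "i-l-1 \<noteq> j-l-1"
          using WsH[of i] WsH[of j] 4 ij st by auto
        then show ?thesis using Q2 by blast
      qed
    qed
    show ?thesis
    proof (cases "i \<le> j")
      case True then show ?thesis using gen ij st by blast
    next
      case False
      then have "b t s = 0" using gen[of j i t s] ij st by simp
      then show ?thesis using b_sym[of s t] by simp
    qed
  qed
  have sumsplit: "(\<Sum>i\<le>l+m. F i) = F 0 + (\<Sum>i<l. F (Suc i)) + (\<Sum>i<m. F (Suc (l + i)))" for F :: "nat \<Rightarrow> 'w"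
  proof -
    have "(\<Sum>i\<le>l+m. F i) = F 0 + (\<Sum>i<l+m. F (Suc i))" by (rule sum.atMost_shift)
    also have "(\<Sum>i<l+m. F (Suc i)) = (\<Sum>i\<in>{0..<l}. F (Suc i)) + (\<Sum>i\<in>{l..<l+m}. F (Suc i))"
      using sum.atLeastLessThan_concat[of 0 l "l+m" "\<lambda>i. F (Suc i)"] by (simp add: atLeast0LessThan)
    also have "(\<Sum>i\<in>{l..<l+m}. F (Suc i)) = (\<Sum>i<m. F (Suc (l + i)))"
      using sum.shift_bounds_nat_ivl[of "\<lambda>i. F (Suc i)" 0 l m] by (simp add: atLeast0LessThan add.commute)
    finally show ?thesis by (simp add: atLeast0LessThan add.assoc)
  qed
  show ?thesis
  proof (rule exI[of _ l], rule exI[of _ m], rule exI[of _ Ws], intro conjI)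
    show "\<forall>i\<le>l+m. sm (Ws i)" using smWs by blast
    show "\<forall>w. \<exists>f. (\<forall>i\<le>l+m. f i \<in> Ws i) \<and> w = (\<Sum>i\<le>l+m. f i)"
    proof
      fix w
      obtain k y where ky: "k \<in> W0" "y \<in> Y" "w = k + y" using Y(3) by blast
      obtain f where f: "\<forall>i<length Ls. f i \<in> Ls!i" "y - (\<Sum>i<length Ls. f i) \<in> Z" using P8 ky(2) by blast
      obtain g where g: "\<forall>i<length Hs. g i \<in> Hs!i" "y - (\<Sum>i<length Ls. f i) = (\<Sum>i<length Hs. g i)"
        using Q3 f(2) by blast
      define F where "F i = (if i = 0 then k else if i \<le> l then f (i-1) else g (i-l-1))" for i
      have "(\<Sum>i\<le>l+m. F i) = k + (\<Sum>i<l. f i) + (\<Sum>i<m. g i)"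
        unfolding sumsplit F_def by simp
      also have "\<dots> = w" using ky(3) g(2) unfolding l_def m_def by (simp add: algebra_simps)
      finally have "w = (\<Sum>i\<le>l+m. F i)" by simp
      moreover have "\<forall>i\<le>l+m. F i \<in> Ws i"
      proof (intro allI impI)
        fix i assume i: "i \<le> l + m"
        consider "i = 0" | "1 \<le> i" "i \<le> l" | "l < i" "i \<le> l + m" using i by (cases "i = 0"; cases "i \<le> l"; simp)
        then show "F i \<in> Ws i"
        proof cases
          case 1 then show ?thesis using ky(1) Ws0 F_def by simp
        next
          case 2 then show ?thesis using WsL[OF 2] f(1) F_def by simp
        next
          case 3 then show ?thesis using WsH[OF 3] g(1) F_def by simp
        qed
      qed
      ultimately show "\<exists>f. (\<forall>i\<le>l+m. f i \<in> Ws i) \<and> w = (\<Sum>i\<le>l+m. f i)" by blast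
    qed
    show "\<forall>f. (\<forall>i\<le>l+m. f i \<in> Ws i) \<and> (\<Sum>i\<le>l+m. f i) = 0 \<longrightarrow> (\<forall>i\<le>l+m. f i = 0)"
    proof (intro allI impI)
      fix f i assume f: "(\<forall>i\<le>l+m. f i \<in> Ws i) \<and> (\<Sum>i\<le>l+m. f i) = 0" and i: "i \<le> l + m"
      have nz: "f i = 0" if i: "1 \<le> i" "i \<le> l + m" for i
      proof -
        have "\<forall>t\<in>Ws i. b (f i) t = 0"
        proof
          fix t assume t: "t \<in> Ws i"
          have "0 = b (\<Sum>j\<le>l+m. f j) t" using f b_zero1 by simp
          also have "\<dots> = (\<Sum>j\<le>l+m. b (f j) t)" by (rule b_sum1)
          also have "\<dots> = b (f i) t + (\<Sum>j\<in>{..l+m}-{i}. b (f j) t)"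
            using i by (simp add: sum.remove)
          also have "(\<Sum>j\<in>{..l+m}-{i}. b (f j) t) = 0"
          proof (intro sum.neutral ballI)
            fix j assume "j \<in> {..l+m}-{i}"
            then show "b (f j) t = 0" using orthWs[of j i "f j" t] f i t by auto
          qed
          finally show "b (f i) t = 0" by simp
        qed
        then show ?thesis using ndWs[OF i] f i unfolding nondeg_def by blast
      qed
      show "f i = 0"
      proof (cases "i = 0")
        case False then show ?thesis using nz i by simp
      next
        case True
        have "(\<Sum>j\<le>l+m. f j) = f 0 + (\<Sum>j\<in>{..l+m}-{0}. f j)"
          by (simp add: sum.remove)
        also have "(\<Sum>j\<in>{..l+m}-{0}. f j) = 0" using nz by (intro sum.neutral) auto
        finally show ?thesis using f True by simp
      qed
    qed
    show "\<forall>i\<le>l+m. \<forall>j\<le>l+m. i \<noteq> j \<longrightarrow> (\<forall>s\<in>Ws i. \<forall>t\<in>Ws j. b s t = 0)"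
      using orthWs by blast
    show "Ws 0 = {s. \<forall>t. b s t = 0}" using Ws0 W0_def by simp
    show "\<forall>i\<in>{1..l+m}. nondeg (Ws i)" using ndWs by auto
    show "\<forall>i\<in>{1..l}. irr (Ws i)" using Lprop by auto
    show "\<forall>j\<in>{l+1..l+m}. hyp (Ws j)" using Hprop by auto
    show "\<forall>U. irr U \<and> U \<subseteq> {\<Sum>j\<in>{l+1..l+m}. f j | f. \<forall>j\<in>{l+1..l+m}. f j \<in> Ws j} \<longrightarrow> iso U"
    proof (intro allI impI)
      fix U assume U: "irr U \<and> U \<subseteq> {\<Sum>j\<in>{l+1..l+m}. f j | f. \<forall>j\<in>{l+1..l+m}. f j \<in> Ws j}"
      have "{\<Sum>j\<in>{l+1..l+m}. f j | f. \<forall>j\<in>{l+1..l+m}. f j \<in> Ws j} \<subseteq> Z"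
      proof
        fix v assume "v \<in> {\<Sum>j\<in>{l+1..l+m}. f j | f. \<forall>j\<in>{l+1..l+m}. f j \<in> Ws j}"
        then obtain f where f: "\<forall>j\<in>{l+1..l+m}. f j \<in> Ws j" "v = (\<Sum>j\<in>{l+1..l+m}. f j)" by blast
        have "\<forall>j\<in>{l+1..l+m}. f j \<in> Z"
        proof
          fix j assume j: "j \<in> {l+1..l+m}"
          then have "l < j" "j \<le> l + m" by auto
          then show "f j \<in> Z" using f(1) j Hprop[of j] by blast
        qed
        then show "v \<in> Z" using f(2) sm_sub[OF smZ] subspace_sum by metis
      qed
      then show "iso U" using U isoZ by blast
    qed
  qed
qed

end


locale setting =
  fixes p q p' :: nat and act :: "(nat set \<Rightarrow> real) \<Rightarrow> 'w::euclidean_space \<Rightarrow> 'w"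
    and Pmap :: "'w \<Rightarrow> 'w \<Rightarrow> nat \<Rightarrow> real"
  assumes pp': "p' \<le> p" and p'4: "p' mod 4 = 3" and modl: "cl0_module p q act"
    and wedge: "wedge2_map (p+q) Pmap" and eqv: "oV_equivariant p q act Pmap"
begin

abbreviation "n \<equiv> p + q"
definition "bl S = act (cl_blade S)"
definition "Ev = {S. S \<subseteq> {..<n} \<and> even (card S)}"

lemma p3: "3 \<le> p" using pp' p'4 by presburger
lemma n3: "3 \<le> n" using p3 by simp

lemma act_lin: "x \<in> Cl0 n \<Longrightarrow> linear (act x)"
  using modl unfolding cl0_module_def by blast
lemma act_addf: "x \<in> Cl0 n \<Longrightarrow> y \<in> Cl0 n \<Longrightarrow> act (\<lambda>S. x S + y S) u = act x u + act y u"
  using modl unfolding cl0_module_def by blast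
lemma act_smult: "x \<in> Cl0 n \<Longrightarrow> act (\<lambda>S. c * x S) u = c *\<^sub>R act x u"
  using modl unfolding cl0_module_def by blast
lemma act_one: "act cl_one u = u"
  using modl unfolding cl0_module_def by blast
lemma act_mult: "x \<in> Cl0 n \<Longrightarrow> y \<in> Cl0 n \<Longrightarrow> act (cl_mult p q x y) u = act x (act y u)"
  using modl unfolding cl0_module_def by blast

lemma Ev_fin: "finite Ev"
  unfolding Ev_def by (rule finite_subset[of _ "Pow {..<n}"]) auto

lemma Ev_Cl0: "S \<in> Ev \<Longrightarrow> cl_blade S \<in> Cl0 n"
  unfolding Ev_def by (auto intro: blade_Cl0)

lemma Ev_symdiff: "S \<in> Ev \<Longrightarrow> T \<in> Ev \<Longrightarrow> (S - T) \<union> (T - S) \<in> Ev"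
  unfolding Ev_def using even_symdiff[of S T] finite_subset[of _ "{..<n}"] by auto

lemma bl_lin: "S \<in> Ev \<Longrightarrow> linear (bl S)"
  unfolding bl_def using act_lin Ev_Cl0 by blast

lemma bl_empty: "bl {} u = u"
  unfolding bl_def cl_one_blade[symmetric] by (rule act_one)

lemma bl_mult: "S \<in> Ev \<Longrightarrow> T \<in> Ev \<Longrightarrow> bl S (bl T u) = blade_coeff p S T *\<^sub>R bl ((S - T) \<union> (T - S)) u"
proof -
  assume S: "S \<in> Ev" and T: "T \<in> Ev"
  have "bl S (bl T u) = act (cl_mult p q (cl_blade S) (cl_blade T)) u"
    unfolding bl_def using act_mult[OF Ev_Cl0[OF S] Ev_Cl0[OF T]] by simp
  also have "\<dots> = act (\<lambda>U. blade_coeff p S T * cl_blade ((S-T)\<union>(T-S)) U) u"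
    using S T unfolding Ev_def by (subst cl_mult_blade) auto
  also have "\<dots> = blade_coeff p S T *\<^sub>R bl ((S - T) \<union> (T - S)) u"
    unfolding bl_def by (rule act_smult[OF Ev_Cl0[OF Ev_symdiff[OF S T]]])
  finally show ?thesis .
qed

lemma bl_comm: "S \<in> Ev \<Longrightarrow> T \<in> Ev \<Longrightarrow> bl S (bl T u) = (blade_coeff p S T * blade_coeff p T S) *\<^sub>R bl T (bl S u)"
proof -
  assume S: "S \<in> Ev" and T: "T \<in> Ev"
  have e: "(T - S) \<union> (S - T) = (S - T) \<union> (T - S)" by blast
  have "bl T (bl S u) = blade_coeff p T S *\<^sub>R bl ((S - T) \<union> (T - S)) u"
    using bl_mult[OF T S] e by simp
  then have "bl ((S - T) \<union> (T - S)) u = blade_coeff p T S *\<^sub>R bl T (bl S u)"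
    using blade_coeff_sq[of p T S] by (simp add: scaleR_scaleR)
  then show ?thesis using bl_mult[OF S T] by (simp add: scaleR_scaleR)
qed

lemma bl_sq: "S \<in> Ev \<Longrightarrow> bl S (bl S u) = blade_coeff p S S *\<^sub>R u"
  using bl_mult[of S S u] bl_empty by simp

lemma Cl0_sum: "F \<subseteq> Ev \<Longrightarrow> (\<lambda>U. \<Sum>S\<in>F. c S * cl_blade S U) \<in> Cl0 n"
  unfolding Cl0_def Cl_def Ev_def cl_blade_def
  by (auto intro!: sum.neutral)

lemma Cl0_expand: "x \<in> Cl0 n \<Longrightarrow> x = (\<lambda>U. \<Sum>S\<in>Ev. x S * cl_blade S U)"
proof
  fix U assume x: "x \<in> Cl0 n"
  have "(\<Sum>S\<in>Ev. x S * cl_blade S U) = (\<Sum>S\<in>Ev. if S = U then x U else 0)"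
    by (intro sum.cong) (auto simp: cl_blade_def)
  also have "\<dots> = (if U \<in> Ev then x U else 0)" using Ev_fin by (simp add: sum.delta')
  also have "\<dots> = x U" using x unfolding Ev_def Cl0_def Cl_def by auto
  finally show "x U = (\<Sum>S\<in>Ev. x S * cl_blade S U)" by simp
qed

lemma act_sum: "F \<subseteq> Ev \<Longrightarrow> act (\<lambda>U. \<Sum>S\<in>F. c S * cl_blade S U) u = (\<Sum>S\<in>F. c S *\<^sub>R bl S u)"
proof (induction F rule: infinite_finite_induct)
  case (infinite F)
  then show ?case using Ev_fin finite_subset by blast
next
  case empty
  have "act (\<lambda>U. 0) u = act (\<lambda>U. 0 * cl_one U) u" by simp
  also have "\<dots> = 0" using act_smult[of cl_one 0 u] blade_Cl0[of "{}" n] cl_one_blade by simp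
  finally show ?case by simp
next
  case (insert S F)
  then have SE: "S \<in> Ev" and FE: "F \<subseteq> Ev" by auto
  have "act (\<lambda>U. \<Sum>S\<in>insert S F. c S * cl_blade S U) u =
        act (\<lambda>U. c S * cl_blade S U + (\<Sum>S\<in>F. c S * cl_blade S U)) u"
    using insert.hyps by simp
  also have "\<dots> = act (\<lambda>U. c S * cl_blade S U) u + act (\<lambda>U. \<Sum>S\<in>F. c S * cl_blade S U) u"
    using act_addf[of "\<lambda>U. c S * cl_blade S U" "\<lambda>U. \<Sum>S\<in>F. c S * cl_blade S U" u]
      Cl0_sum[OF FE] Cl0_sum[of "{S}" c] SE by simp
  also have "\<dots> = c S *\<^sub>R bl S u + (\<Sum>S\<in>F. c S *\<^sub>R bl S u)"
    using insert.IH[OF FE] act_smult[OF Ev_Cl0[OF SE]] unfolding bl_def by simp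
  finally show ?case using insert.hyps by simp
qed

lemma act_expand: "x \<in> Cl0 n \<Longrightarrow> act x u = (\<Sum>S\<in>Ev. x S *\<^sub>R bl S u)"
  using act_sum[of Ev x u] Cl0_expand[of x] by simp

lemma closure_blades:
  assumes U: "subspace U" and pairs: "\<And>i j u. i < j \<Longrightarrow> j < n \<Longrightarrow> u \<in> U \<Longrightarrow> bl {i, j} u \<in> U"
  shows "cl0_submodule p q act U"
proof -
  have ev: "\<forall>u\<in>U. bl S u \<in> U" if "S \<in> Ev" for S
    using that
  proof (induction "card S" arbitrary: S rule: less_induct)
    case less
    show ?case
    proof (cases "S = {}")
      case True then show ?thesis using bl_empty by simp
    next
      case False
      have finS: "finite S" using less.prems unfolding Ev_def using finite_subset by blast
      define i where "i = Min S"
      have iS: "i \<in> S" using False finS unfolding i_def by simp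
      have "card S \<noteq> 1"
      proof
        assume "card S = 1"
        then show False using less.prems unfolding Ev_def by simp
      qed
      have "S - {i} \<noteq> {}"
      proof
        assume "S - {i} = {}"
        then have "S = {i}" using iS by blast
        then show False using \<open>card S \<noteq> 1\<close> by simp
      qed
      define j where "j = Min (S - {i})"
      have jS: "j \<in> S - {i}" using \<open>S - {i} \<noteq> {}\<close> finS unfolding j_def by (intro Min_in) auto
      have "i \<le> j" using jS finS unfolding i_def by (intro Min_le) auto
      then have ij: "i < j" using jS by auto
      have jn: "j < n" using jS less.prems unfolding Ev_def by auto
      define S' where "S' = S - {i, j}"
      have PE: "{i, j} \<in> Ev" using ij jn unfolding Ev_def by auto
      have cS': "card S' < card S" unfolding S'_def using iS jS finS by (intro psubset_card_mono) auto
      have "card {i, j} \<le> card S" using iS jS finS by (intro card_mono) auto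
      then have c2: "2 \<le> card S" using ij by simp
      have cS'2: "card S' + 2 = card S" unfolding S'_def using iS jS finS ij c2
        by (subst card_Diff_subset) auto
      have "even (card S' + 2)" using less.prems cS'2 unfolding Ev_def by simp
      then have S'E: "S' \<in> Ev" using less.prems unfolding Ev_def S'_def by auto
      have sd: "({i, j} - S') \<union> (S' - {i, j}) = S" unfolding S'_def using iS jS by auto
      show ?thesis
      proof
        fix u assume u: "u \<in> U"
        have "bl {i, j} (bl S' u) = blade_coeff p {i, j} S' *\<^sub>R bl S u"
          using bl_mult[OF PE S'E] sd by simp
        then have "bl S u = blade_coeff p {i, j} S' *\<^sub>R bl {i, j} (bl S' u)"
          using blade_coeff_sq[of p "{i,j}" S'] by (simp add: scaleR_scaleR)
        moreover have "bl S' u \<in> U" using less.hyps[OF cS' S'E] u by blast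
        ultimately show "bl S u \<in> U" using pairs[OF ij jn] U subspace_scale by metis
      qed
    qed
  qed
  show ?thesis unfolding cl0_submodule_def
  proof (intro conjI U ballI)
    fix x u assume x: "x \<in> Cl0 n" and u: "u \<in> U"
    show "act x u \<in> U" unfolding act_expand[OF x]
      using ev u U by (intro subspace_sum subspace_scale) auto
  qed
qed


lemma P_Vset: "k \<ge> n \<Longrightarrow> Pmap s t k = 0"
proof -
  assume k: "k \<ge> n"
  have "Pmap s t \<in> Vset n" using wedge unfolding wedge2_map_def by blast
  then show ?thesis using k unfolding Vset_def by blast
qed
lemma P_add1: "Pmap (s + s') t k = Pmap s t k + Pmap s' t k"
  using wedge unfolding wedge2_map_def by (simp add: fun_eq_iff)
lemma P_smult1: "Pmap (c *\<^sub>R s) t k = c * Pmap s t k"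
  using wedge unfolding wedge2_map_def by (simp add: fun_eq_iff)
lemma P_add2: "Pmap s (t + t') k = Pmap s t k + Pmap s t' k"
  using wedge unfolding wedge2_map_def by (simp add: fun_eq_iff)
lemma P_smult2: "Pmap s (c *\<^sub>R t) k = c * Pmap s t k"
  using wedge unfolding wedge2_map_def by (simp add: fun_eq_iff)
lemma P_alt: "Pmap s s k = 0"
  using wedge unfolding wedge2_map_def by (simp add: fun_eq_iff)

lemma P_lin1: "linear (\<lambda>s. Pmap s t k)"
  by (rule linearI) (simp_all add: P_add1 P_smult1)
lemma P_lin2: "linear (\<lambda>t. Pmap s t k)"
  by (rule linearI) (simp_all add: P_add2 P_smult2)

lemma P_antisym: "Pmap s t k = - Pmap t s k"
proof -
  have "0 = Pmap (s + t) (s + t) k" using P_alt by simp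
  also have "\<dots> = Pmap s s k + Pmap t s k + (Pmap s t k + Pmap t t k)" by (simp only: P_add1 P_add2)
  also have "\<dots> = Pmap s t k + Pmap t s k" by (simp add: P_alt)
  finally show ?thesis by simp
qed

definition "\<beta> s t = Pmap s t 0"
definition "E = bl {1..<p'}"
definition "B j = bl {0, j}"

lemma b_eq: "bform p q p' act Pmap s t = \<beta> (E s) t"
  unfolding bform_def \<beta>_def E_def bl_def using ip_basis[of 0 p q] p3 sgn_0[of p] by simp

lemma spin_basis:
  assumes ij: "i < j" "j < n"
  shows "spin p q (stdbasis i) (stdbasis j) = (\<lambda>S. (-1/2) * cl_blade {i, j} S)"
proof -
  have i: "i < n" using ij by simp
  have e1: "({i} - {j}) \<union> ({j} - {i}) = {i, j}" using ij by auto
  have e2: "({j} - {i}) \<union> ({i} - {j}) = {i, j}" using ij by auto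
  show ?thesis
    unfolding spin_def cl_vec_basis[OF i] cl_vec_basis[OF ij(2)]
    using cl_mult_blade[of "{i}" p q "{j}"] cl_mult_blade[of "{j}" p q "{i}"] ij e1 e2
      bc_single1[OF ij(1), of p] bc_single2[OF ij(1), of p]
    by (auto simp: fun_eq_iff)
qed

lemma pairE: "i < j \<Longrightarrow> j < n \<Longrightarrow> {i, j} \<in> Ev"
  unfolding Ev_def by auto

lemma spin_Cl0: "i < j \<Longrightarrow> j < n \<Longrightarrow> spin p q (stdbasis i) (stdbasis j) \<in> Cl0 n"
  unfolding spin_basis by (auto simp: Cl0_def Cl_def cl_blade_def)

lemma act_spin: "i < j \<Longrightarrow> j < n \<Longrightarrow> act (spin p q (stdbasis i) (stdbasis j)) u = (-1/2) *\<^sub>R bl {i, j} u"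
  unfolding spin_basis bl_def by (rule act_smult[OF Ev_Cl0[OF pairE]])

lemma stdbasis_V: "i < n \<Longrightarrow> stdbasis i \<in> Vset n"
  unfolding Vset_def stdbasis_def by auto

lemma oV_basis: "i < n \<Longrightarrow> j < n \<Longrightarrow>
  oV_act p q (stdbasis i) (stdbasis j) z k = (if k = i then sgnpq p j * z j else 0) - (if k = j then sgnpq p i * z i else 0)"
  unfolding oV_act_def by (simp add: ip_basis) (simp add: stdbasis_def)

lemma eqv_gen: "x \<in> Vset n \<Longrightarrow> y \<in> Vset n \<Longrightarrow>
   Pmap (act (spin p q x y) s) t k + Pmap s (act (spin p q x y) t) k = oV_act p q x y (Pmap s t) k"
proof -
  assume xy: "x \<in> Vset n" "y \<in> Vset n"
  have "(\<lambda>i. Pmap (act (spin p q x y) s) t i + Pmap s (act (spin p q x y) t) i) = oV_act p q x y (Pmap s t)"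
    using eqv xy unfolding oV_equivariant_def by blast
  from fun_cong[OF this, of k] show ?thesis by simp
qed

lemma eqv_basis:
  assumes "i < j" "j < n"
  shows "(-1/2) * (Pmap (bl {i,j} s) t k + Pmap s (bl {i,j} t) k) =
    (if k = i then sgnpq p j * Pmap s t j else 0) - (if k = j then sgnpq p i * Pmap s t i else 0)"
  using eqv_gen[OF stdbasis_V stdbasis_V, of i j s t k] assms
  unfolding act_spin[OF assms] P_smult1 P_smult2 oV_basis[OF less_trans[OF assms] assms(2)]
  by (simp add: distrib_left)

lemma R3: "0 < i \<Longrightarrow> i < j \<Longrightarrow> j < n \<Longrightarrow> \<beta> (bl {i,j} s) t = - \<beta> s (bl {i,j} t)"
  using eqv_basis[of i j s t 0] unfolding \<beta>_def by simp

lemma R1: "0 < j \<Longrightarrow> j < n \<Longrightarrow> (-1/2) * (\<beta> (B j s) t + \<beta> s (B j t)) = sgnpq p j * Pmap s t j"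
  using eqv_basis[of 0 j s t 0] unfolding \<beta>_def B_def by simp

lemma R2: "0 < j \<Longrightarrow> j < n \<Longrightarrow> (-1/2) * (Pmap (B j s) t j + Pmap s (B j t) j) = - \<beta> s t"
  using eqv_basis[of 0 j s t j] p3 unfolding \<beta>_def B_def by (simp add: sgn_0)

lemma Bsq: "0 < j \<Longrightarrow> j < n \<Longrightarrow> B j (B j u) = (- sgnpq p j) *\<^sub>R u"
  unfolding B_def using bl_sq[OF pairE[of 0 j]] bc_pair_sq[of j p] p3 by simp

lemma beta_smult1: "\<beta> (c *\<^sub>R s) t = c * \<beta> s t" unfolding \<beta>_def by (rule P_smult1)
lemma beta_smult2: "\<beta> s (c *\<^sub>R t) = c * \<beta> s t" unfolding \<beta>_def by (rule P_smult2)
lemma beta_neg1: "\<beta> (- s) t = - \<beta> s t" using beta_smult1[of "-1" s t] by simp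
lemma beta_neg2: "\<beta> s (- t) = - \<beta> s t" using beta_smult2[of s "-1" t] by simp

lemma R4a:
  assumes j: "0 < j" "j < n"
  shows "\<beta> (B j s) (B j t) = - sgnpq p j * \<beta> s t"
proof -
  let ?g = "sgnpq p j"
  have 1: "?g * Pmap (B j s) t j = (-1/2) * (- ?g * \<beta> s t + \<beta> (B j s) (B j t))"
    using R1[OF j, of "B j s" t] Bsq[OF j] by (simp add: beta_smult1 beta_neg1)
  have 2: "?g * Pmap s (B j t) j = (-1/2) * (\<beta> (B j s) (B j t) - ?g * \<beta> s t)"
    using R1[OF j, of s "B j t"] Bsq[OF j] by (simp add: beta_smult2 beta_neg2)
  have 3: "(-1/2) * (?g * Pmap (B j s) t j + ?g * Pmap s (B j t) j) = - ?g * \<beta> s t"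
    using R2[OF j, of s t] by (simp add: algebra_simps)
  have "(-1/2) * ((-1/2) * (- ?g * \<beta> s t + \<beta> (B j s) (B j t)) + (-1/2) * (\<beta> (B j s) (B j t) - ?g * \<beta> s t))
      = - ?g * \<beta> s t" using 1 2 3 by simp
  then show ?thesis by (simp add: algebra_simps)
qed

lemma R4:
  assumes j: "0 < j" "j < n"
  shows "\<beta> (B j s) t = \<beta> s (B j t)"
proof -
  have "\<beta> (B j s) (B j (B j t)) = - sgnpq p j * \<beta> s (B j t)" by (rule R4a[OF j])
  then have "- sgnpq p j * \<beta> (B j s) t = - sgnpq p j * \<beta> s (B j t)"
    using Bsq[OF j] by (simp add: beta_smult2 beta_neg2)
  moreover have "- sgnpq p j \<noteq> 0" using sgn_ne0[of p j] by simp
  ultimately show ?thesis by (metis mult_left_cancel)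
qed

lemma R5:
  assumes j: "0 < j" "j < n"
  shows "Pmap s t j = - sgnpq p j * \<beta> (B j s) t"
proof -
  have "sgnpq p j * Pmap s t j = - \<beta> (B j s) t" using R1[OF j, of s t] R4[OF j, of s t] by simp
  then have "sgnpq p j * (sgnpq p j * Pmap s t j) = - sgnpq p j * \<beta> (B j s) t" by simp
  then show ?thesis using sgn_sq[of p j] by (simp add: mult.assoc[symmetric])
qed


lemma E_ind: "2 * r < n \<Longrightarrow> \<beta> (bl {1..<2*r+1} s) t = (-1)^r * \<beta> s (bl {1..<2*r+1} t)"
proof (induction r arbitrary: s t)
  case 0
  then show ?case using bl_empty by simp
next
  case (Suc r)
  define S where "S = {1..<2*r+1}"
  define P where "P = {2*r+1, 2*r+2}"
  have SE: "S \<in> Ev" unfolding S_def Ev_def using Suc.prems by auto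
  have PE: "P \<in> Ev" unfolding P_def Ev_def using Suc.prems by auto
  have sd1: "(S - P) \<union> (P - S) = {1..<2*Suc r+1}" unfolding S_def P_def using symdiff_E[of r] by simp
  have sd2: "(P - S) \<union> (S - P) = {1..<2*Suc r+1}" using sd1 by blast
  have e1: "bl {1..<2*Suc r+1} u = bl S (bl P u)" for u
    using bl_mult[OF SE PE, of u] sd1 bc_E1[of p r] unfolding S_def P_def by simp
  have e2: "bl {1..<2*Suc r+1} u = bl P (bl S u)" for u
    using bl_mult[OF PE SE, of u] sd2 bc_E2[of p r] unfolding S_def P_def by simp
  have IH: "\<beta> (bl S x) y = (-1)^r * \<beta> x (bl S y)" for x y
    unfolding S_def using Suc.IH[of x y] Suc.prems by simp
  have R: "\<beta> (bl P x) y = - \<beta> x (bl P y)" for x y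
    unfolding P_def using R3[of "2*r+1" "2*r+2" x y] Suc.prems by simp
  have "\<beta> (bl {1..<2*Suc r+1} s) t = \<beta> (bl S (bl P s)) t" using e1 by simp
  also have "\<dots> = (-1)^r * \<beta> (bl P s) (bl S t)" by (rule IH)
  also have "\<dots> = (-1)^r * (- \<beta> s (bl P (bl S t)))" using R by simp
  also have "\<dots> = (-1)^(Suc r) * \<beta> s (bl {1..<2*Suc r+1} t)" using e2 by simp
  finally show ?case .
qed

lemma EE: "{1..<p'} \<in> Ev"
proof -
  have "card {1..<p'} = p' - 1" by simp
  moreover have "even (p' - 1)" using p'4 by presburger
  ultimately show ?thesis unfolding Ev_def using pp' by auto
qed

lemma E_lin: "linear E" unfolding E_def using bl_lin[OF EE] .

lemma E_skew: "\<beta> (E s) t = - \<beta> s (E t)"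
proof -
  define r where "r = p' div 2"
  have pr: "p' = 2 * r + 1" unfolding r_def using p'4 by presburger
  have "odd r" unfolding r_def using p'4 by presburger
  then have m1: "(-1::real)^r = -1" by simp
  have "2 * r < n" using pr pp' by simp
  moreover have "E = bl {1..<2*r+1}" unfolding E_def using pr by simp
  ultimately show ?thesis using E_ind[of r s t] m1 by simp
qed

lemma b_sym': "bform p q p' act Pmap s t = bform p q p' act Pmap t s"
  unfolding b_eq using E_skew[of s t] P_antisym[of s "E t" 0] unfolding \<beta>_def by simp

lemma b_lin': "linear (\<lambda>s. bform p q p' act Pmap s t)"
  unfolding b_eq \<beta>_def
  by (rule linearI) (simp_all add: linear_add[OF E_lin] linear_scale[OF E_lin] P_add1 P_smult1)

lemma beta_adj: "i < j \<Longrightarrow> j < n \<Longrightarrow> \<exists>\<delta>. \<delta> * \<delta> = 1 \<and> (\<forall>x y. \<beta> x (bl {i,j} y) = \<delta> * \<beta> (bl {i,j} x) y)"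
proof -
  assume ij: "i < j" "j < n"
  show ?thesis
  proof (cases "i = 0")
    case True
    then show ?thesis using R4[of j] ij unfolding B_def by (intro exI[of _ 1]) simp
  next
    case False
    then show ?thesis using R3[of i j] ij by (intro exI[of _ "-1"]) simp
  qed
qed

lemma sub_Cl0: "cl0_submodule p q act U \<Longrightarrow> S \<in> Ev \<Longrightarrow> u \<in> U \<Longrightarrow> bl S u \<in> U"
  unfolding cl0_submodule_def bl_def using Ev_Cl0 by blast

lemma sm_orth': "cl0_submodule p q act U \<Longrightarrow> cl0_submodule p q act {t. \<forall>s\<in>U. bform p q p' act Pmap s t = 0}"
proof -
  assume U: "cl0_submodule p q act U"
  have lin2: "linear (\<lambda>t. bform p q p' act Pmap s t)" for s
    using b_lin'[of s] by (simp add: b_sym')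
  show ?thesis
  proof (rule closure_blades)
    show "subspace {t. \<forall>s\<in>U. bform p q p' act Pmap s t = 0}"
      unfolding subspace_def by (simp add: linear_add[OF lin2] linear_scale[OF lin2] linear_0[OF lin2])
  next
    fix i j t assume ij: "i < j" "j < n" and t: "t \<in> {t. \<forall>s\<in>U. bform p q p' act Pmap s t = 0}"
    obtain \<delta> where d: "\<forall>x y. \<beta> x (bl {i,j} y) = \<delta> * \<beta> (bl {i,j} x) y" using beta_adj[OF ij] by blast
    have PE: "{i,j} \<in> Ev" using pairE[OF ij] .
    show "bl {i, j} t \<in> {t. \<forall>s\<in>U. bform p q p' act Pmap s t = 0}"
    proof (intro CollectI ballI)
      fix s assume s: "s \<in> U"
      have "bform p q p' act Pmap s (bl {i,j} t) = \<beta> (E s) (bl {i,j} t)" by (rule b_eq)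
      also have "\<dots> = \<delta> * \<beta> (bl {i,j} (E s)) t" using d by simp
      also have "\<dots> = \<delta> * \<beta> ((blade_coeff p {i,j} {1..<p'} * blade_coeff p {1..<p'} {i,j}) *\<^sub>R E (bl {i,j} s)) t"
        unfolding E_def using bl_comm[OF PE EE] by simp
      also have "\<dots> = \<delta> * (blade_coeff p {i,j} {1..<p'} * blade_coeff p {1..<p'} {i,j}) * bform p q p' act Pmap (bl {i,j} s) t"
        by (simp add: beta_smult1 b_eq)
      also have "bform p q p' act Pmap (bl {i,j} s) t = 0" using t sub_Cl0[OF U PE s] by blast
      finally show "bform p q p' act Pmap s (bl {i,j} t) = 0" by simp
    qed
  qed
qed

lemma beta_zero:
  assumes U: "cl0_submodule p q act U" and s: "s \<in> U" and t: "\<forall>s'\<in>U. bform p q p' act Pmap s' t = 0"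
  shows "\<beta> s t = 0"
proof -
  let ?c = "blade_coeff p {1..<p'} {1..<p'}"
  have "E (E s) = ?c *\<^sub>R s" unfolding E_def by (rule bl_sq[OF EE])
  then have "s = ?c *\<^sub>R E (E s)" using blade_coeff_sq[of p "{1..<p'}" "{1..<p'}"] by (simp add: scaleR_scaleR)
  then have "\<beta> s t = ?c * bform p q p' act Pmap (E s) t" by (metis beta_smult1 b_eq)
  moreover have "E s \<in> U" unfolding E_def using sub_Cl0[OF U EE s] .
  ultimately show ?thesis using t by simp
qed

lemma P_zero:
  assumes U: "cl0_submodule p q act U" and s: "s \<in> U" and t: "\<forall>s'\<in>U. bform p q p' act Pmap s' t = 0"
  shows "Pmap s t = (\<lambda>k. 0)"
proof
  fix k
  show "Pmap s t k = 0"
  proof (cases "k = 0")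
    case True then show ?thesis using beta_zero[OF U s t] unfolding \<beta>_def by simp
  next
    case False
    show ?thesis
    proof (cases "k < n")
      case True
      have "B k s \<in> U" unfolding B_def using sub_Cl0[OF U pairE s] False True by simp
      then show ?thesis using R5[of k s t] False True beta_zero[OF U _ t] by simp
    next
      case False then show ?thesis using P_Vset by simp
    qed
  qed
qed


definition "gg u v = (\<Sum>S\<in>Ev. inner (bl S u) (bl S v))"

lemma gg_lin1: "linear (\<lambda>u. gg u v)"
  unfolding gg_def
  by (rule linearI) (simp_all add: linear_add[OF bl_lin] linear_scale[OF bl_lin] inner_add_left sum.distrib sum_distrib_left)

lemma gg_sym: "gg u v = gg v u"
  unfolding gg_def by (simp add: inner_commute)

lemma gg_lin2: "linear (\<lambda>v. gg u v)"
  using gg_lin1[of u] by (simp add: gg_sym)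

lemma gg_pos: "gg u u = 0 \<Longrightarrow> u = 0"
proof -
  assume g: "gg u u = 0"
  have "{} \<in> Ev" unfolding Ev_def by simp
  then have "inner (bl {} u) (bl {} u) \<le> gg u u"
    unfolding gg_def using Ev_fin by (intro member_le_sum) auto
  then have "inner u u \<le> 0" using g bl_empty by simp
  then have "inner u u = 0" using inner_ge_zero[of u] by linarith
  then show "u = 0" by simp
qed

lemma gg_inv: "T \<in> Ev \<Longrightarrow> gg (bl T u) (bl T v) = gg u v"
proof -
  assume T: "T \<in> Ev"
  define h where "h X = inner (bl X u) (bl X v)" for X
  have "gg (bl T u) (bl T v) = (\<Sum>S\<in>Ev. h ((S - T) \<union> (T - S)))"
    unfolding gg_def h_def
  proof (intro sum.cong refl)
    fix S assume S: "S \<in> Ev"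
    show "inner (bl S (bl T u)) (bl S (bl T v)) = inner (bl ((S - T) \<union> (T - S)) u) (bl ((S - T) \<union> (T - S)) v)"
      using bl_mult[OF S T] blade_coeff_sq[of p S T] by simp
  qed
  also have "\<dots> = (\<Sum>S\<in>Ev. h S)"
    by (rule sum.reindex_bij_witness[of Ev "\<lambda>S. (S - T) \<union> (T - S)" "\<lambda>S. (S - T) \<union> (T - S)"])
       (auto simp: Ev_symdiff[OF _ T])
  finally show ?thesis unfolding gg_def h_def .
qed

lemma sm_compl':
  assumes U: "cl0_submodule p q act U" and Y: "cl0_submodule p q act Y" and UY: "U \<subseteq> Y"
  shows "\<exists>C. cl0_submodule p q act C \<and> C \<subseteq> Y \<and> U \<inter> C = {0} \<and> (\<forall>y\<in>Y. \<exists>u\<in>U. \<exists>c\<in>C. y = u + c)"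
proof -
  define Og where "Og = {v. \<forall>u\<in>U. gg u v = 0}"
  have subU: "subspace U" and subY: "subspace Y" using U Y unfolding cl0_submodule_def by auto
  have smO: "cl0_submodule p q act Og"
  proof (rule closure_blades)
    show "subspace Og"
      unfolding Og_def subspace_def by (simp add: linear_add[OF gg_lin2] linear_scale[OF gg_lin2] linear_0[OF gg_lin2])
  next
    fix i j v assume ij: "i < j" "j < n" and v: "v \<in> Og"
    have PE: "{i,j} \<in> Ev" using pairE[OF ij] .
    let ?c = "blade_coeff p {i,j} {i,j}"
    show "bl {i, j} v \<in> Og" unfolding Og_def
    proof (intro CollectI ballI)
      fix u assume u: "u \<in> U"
      have "u = ?c *\<^sub>R bl {i,j} (bl {i,j} u)"
        using bl_sq[OF PE, of u] blade_coeff_sq[of p "{i,j}" "{i,j}"] by (simp add: scaleR_scaleR)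
      then have "gg u (bl {i,j} v) = ?c * gg (bl {i,j} (bl {i,j} u)) (bl {i,j} v)"
        by (metis linear_scale[OF gg_lin1] real_scaleR_def)
      also have "\<dots> = ?c * gg (bl {i,j} u) v" using gg_inv[OF PE] by simp
      also have "gg (bl {i,j} u) v = 0" using v sub_Cl0[OF U PE u] unfolding Og_def by blast
      finally show "gg u (bl {i,j} v) = 0" by simp
    qed
  qed
  define C where "C = Y \<inter> Og"
  have smC: "cl0_submodule p q act C"
    using smO Y unfolding C_def cl0_submodule_def by (auto intro: subspace_inter)
  have UC: "U \<inter> C = {0}"
  proof
    show "U \<inter> C \<subseteq> {0}" unfolding C_def Og_def using gg_pos by blast
    show "{0} \<subseteq> U \<inter> C" using subspace_0[OF subU] subspace_0[OF subY] subspace_0 smC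
      unfolding cl0_submodule_def C_def by auto
  qed
  have span: "\<exists>u\<in>U. \<exists>c\<in>C. y = u + c" if y: "y \<in> Y" for y
  proof -
    obtain u where u: "u \<in> U" "\<forall>t\<in>U. gg y t = gg u t"
      using riesz[of gg U y] gg_lin1 gg_lin2 subU gg_pos by blast
    have "y - u \<in> Y" using y u(1) UY subY subspace_diff by blast
    moreover have "y - u \<in> Og" unfolding Og_def
      using u(2) by (simp add: gg_sym[of _ "y - u"] linear_diff[OF gg_lin1])
    ultimately show ?thesis using u(1) unfolding C_def by (intro bexI[of _ u] bexI[of _ "y - u"]) auto
  qed
  show ?thesis using smC UC span unfolding C_def by blast
qed

lemma sm_sumS: "cl0_submodule p q act U \<Longrightarrow> cl0_submodule p q act V \<Longrightarrow> cl0_submodule p q act {u + v |u v. u \<in> U \<and> v \<in> V}"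
proof -
  assume U: "cl0_submodule p q act U" and V: "cl0_submodule p q act V"
  show "cl0_submodule p q act {u + v |u v. u \<in> U \<and> v \<in> V}"
    unfolding cl0_submodule_def
  proof (intro conjI ballI)
    show "subspace {u + v |u v. u \<in> U \<and> v \<in> V}"
      using U V unfolding cl0_submodule_def by (intro subspace_sums) auto
    fix x w assume x: "x \<in> Cl0 n" and w: "w \<in> {u + v |u v. u \<in> U \<and> v \<in> V}"
    then obtain u v where uv: "u \<in> U" "v \<in> V" "w = u + v" by blast
    have "act x w = act x u + act x v" using linear_add[OF act_lin[OF x]] uv(3) by simp
    moreover have "act x u \<in> U" "act x v \<in> V" using U V x uv unfolding cl0_submodule_def by auto
    ultimately show "act x w \<in> {u + v |u v. u \<in> U \<and> v \<in> V}" by blast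
  qed
qed

lemma sm_subS: "cl0_submodule p q act U \<Longrightarrow> subspace U" unfolding cl0_submodule_def by blast
lemma sm_IntS: "cl0_submodule p q act U \<Longrightarrow> cl0_submodule p q act V \<Longrightarrow> cl0_submodule p q act (U \<inter> V)"
  unfolding cl0_submodule_def by (auto intro: subspace_inter)
lemma sm_UNIVS: "cl0_submodule p q act UNIV" unfolding cl0_submodule_def by simp

lemma dec_ok: "decomp (cl0_submodule p q act) (bform p q p' act Pmap)"
  unfolding decomp_def
  apply (intro conjI allI impI)
  apply (erule sm_subS)
  apply (erule (1) sm_IntS)
  apply (erule (1) sm_sumS)
  apply (erule sm_orth')
  apply (rule sm_UNIVS)
  apply (erule (2) sm_compl')
  apply (rule b_lin')
  apply (rule b_sym')
  done

sublocale dec: decomp "cl0_submodule p q act" "bform p q p' act Pmap"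
  by (rule dec_ok)


lemma sum_split_add: "(\<Sum>j<a+(m::nat). f j) = (\<Sum>j<a. f j) + (\<Sum>j<m. f (a + j))"
  by (induction m) (simp_all add: add.assoc)

context
  fixes U assumes smU: "cl0_submodule p q act U"
begin

abbreviation "PI \<equiv> Pi_image Pmap U"

lemma subU: "subspace U" using smU unfolding cl0_submodule_def by blast

lemma PI_V: "PI \<subseteq> Vset n"
  unfolding Pi_image_def Vset_def using P_Vset by auto

lemma PI_dest:
  assumes "v \<in> Pi_image Pmap U"
    and "\<And>(k::nat) s t. (\<forall>j<k. s j \<in> U \<and> t j \<in> U) \<Longrightarrow> v = (\<lambda>i. \<Sum>j<k. Pmap (s j) (t j) i) \<Longrightarrow> R"
  shows R
  using assms(1) unfolding Pi_image_def mem_Collect_eq by (elim exE conjE) (rule assms(2))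

lemma PI_intro:
  assumes "\<forall>j<(k::nat). s j \<in> U \<and> t j \<in> U" "v = (\<lambda>i. \<Sum>j<k. Pmap (s j) (t j) i)"
  shows "v \<in> PI"
  unfolding Pi_image_def
  by (rule CollectI, rule exI[of _ k], rule exI[of _ s], rule exI[of _ t]) (rule conjI[OF assms])

lemma PI_zero: "(\<lambda>i. 0) \<in> PI"
  unfolding Pi_image_def by (rule CollectI, rule exI[of _ 0]) simp

lemma PI_single: "s \<in> U \<Longrightarrow> t \<in> U \<Longrightarrow> Pmap s t \<in> PI"
  unfolding Pi_image_def by (rule CollectI, rule exI[of _ 1], rule exI[of _ "\<lambda>_. s"], rule exI[of _ "\<lambda>_. t"]) auto

lemma PI_add: "v \<in> PI \<Longrightarrow> w \<in> PI \<Longrightarrow> (\<lambda>i. v i + w i) \<in> PI"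
proof -
  assume vP: "v \<in> PI" and wP: "w \<in> PI"
  obtain k1 s1 t1 where v: "\<forall>j<(k1::nat). s1 j \<in> U \<and> t1 j \<in> U" "v = (\<lambda>i. \<Sum>j<k1. Pmap (s1 j) (t1 j) i)"
    by (rule PI_dest[OF vP])
  obtain k2 s2 t2 where w: "\<forall>j<(k2::nat). s2 j \<in> U \<and> t2 j \<in> U" "w = (\<lambda>i. \<Sum>j<k2. Pmap (s2 j) (t2 j) i)"
    by (rule PI_dest[OF wP])
  define s where "s j = (if j < k1 then s1 j else s2 (j - k1))" for j
  define t where "t j = (if j < k1 then t1 j else t2 (j - k1))" for j
  have "\<forall>j<k1+k2. s j \<in> U \<and> t j \<in> U" unfolding s_def t_def using v(1) w(1) by auto
  moreover have "(\<lambda>i. v i + w i) = (\<lambda>i. \<Sum>j<k1+k2. Pmap (s j) (t j) i)"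
    unfolding sum_split_add v(2) w(2) s_def t_def by simp
  ultimately show ?thesis by (rule PI_intro)
qed

lemma PI_scale: "v \<in> PI \<Longrightarrow> (\<lambda>i. c * v i) \<in> PI"
proof -
  assume vP: "v \<in> PI"
  obtain k s t where v: "\<forall>j<(k::nat). s j \<in> U \<and> t j \<in> U" "v = (\<lambda>i. \<Sum>j<k. Pmap (s j) (t j) i)"
    by (rule PI_dest[OF vP])
  have "\<forall>j<k. c *\<^sub>R s j \<in> U \<and> t j \<in> U" using v(1) subU subspace_scale by blast
  moreover have "(\<lambda>i. c * v i) = (\<lambda>i. \<Sum>j<k. Pmap (c *\<^sub>R s j) (t j) i)"
    unfolding v(2) by (simp add: P_smult1 sum_distrib_left)
  ultimately show ?thesis by (rule PI_intro)
qed

lemma PI_T: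
  assumes v: "v \<in> PI" and ij: "i < j" "j < n"
  shows "oV_act p q (stdbasis i) (stdbasis j) v \<in> PI"
proof -
  obtain k s t where st: "\<forall>l<(k::nat). s l \<in> U \<and> t l \<in> U" and ve: "v = (\<lambda>i. \<Sum>l<k. Pmap (s l) (t l) i)"
    by (rule PI_dest[OF v])
  let ?A = "act (spin p q (stdbasis i) (stdbasis j))"
  have inU: "x \<in> U \<Longrightarrow> ?A x \<in> U" for x using smU spin_Cl0[OF ij] unfolding cl0_submodule_def by blast
  have i: "i < n" using ij by simp
  have "oV_act p q (stdbasis i) (stdbasis j) v =
        (\<lambda>r. \<Sum>l<k. oV_act p q (stdbasis i) (stdbasis j) (Pmap (s l) (t l)) r)"
    unfolding ve oV_basis[OF i ij(2)] by (auto simp: sum_distrib_left sum_subtractf fun_eq_iff)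
  also have "\<dots> = (\<lambda>r. (\<Sum>l<k. Pmap (?A (s l)) (t l) r) + (\<Sum>l<k. Pmap (s l) (?A (t l)) r))"
    unfolding sum.distrib[symmetric] eqv_gen[OF stdbasis_V[OF i] stdbasis_V[OF ij(2)]] ..
  finally have e: "oV_act p q (stdbasis i) (stdbasis j) v = \<dots>" .
  have "(\<lambda>r. \<Sum>l<k. Pmap (?A (s l)) (t l) r) \<in> PI"
    by (rule PI_intro[of k "\<lambda>l. ?A (s l)" t]) (use st inU in auto)
  moreover have "(\<lambda>r. \<Sum>l<k. Pmap (s l) (?A (t l)) r) \<in> PI"
    by (rule PI_intro[of k s "\<lambda>l. ?A (t l)"]) (use st inU in auto)
  ultimately show ?thesis unfolding e by (rule PI_add)
qed

lemma PI_R: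
  assumes v: "v \<in> PI" and ij: "i < j" "j < n"
  shows "(\<lambda>k. if k = i \<or> k = j then v k else 0) \<in> PI"
proof -
  let ?T = "oV_act p q (stdbasis i) (stdbasis j)"
  have i: "i < n" using ij by simp
  have "(\<lambda>k. (- sgnpq p i * sgnpq p j) * ?T (?T v) k) = (\<lambda>k. if k = i \<or> k = j then v k else 0)"
  proof
    fix k
    have "(- sgnpq p i * sgnpq p j) * ?T (?T v) k =
      (- sgnpq p i * sgnpq p j) * ((if k = i then sgnpq p j * (- (sgnpq p i * v i)) else 0) - (if k = j then sgnpq p i * (sgnpq p j * v j) else 0))"
      unfolding oV_basis[OF i ij(2)] using ij by simp
    also have "\<dots> = (if k = i \<or> k = j then v k else 0)"
      using ij sgn_sq[of p i] sgn_sq[of p j] by (auto simp: algebra_simps)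
    finally show "(- sgnpq p i * sgnpq p j) * ?T (?T v) k = (if k = i \<or> k = j then v k else 0)" .
  qed
  moreover have "(\<lambda>k. (- sgnpq p i * sgnpq p j) * ?T (?T v) k) \<in> PI"
    using PI_scale PI_T[OF PI_T[OF v ij] ij] by blast
  ultimately show ?thesis by simp
qed

lemma PI_full:
  assumes v: "v \<in> PI" and v0: "v 0 \<noteq> 0"
  shows "Vset n \<subseteq> PI"
proof -
  have w: "(\<lambda>k. if k = 0 \<or> k = 1 then v k else 0) \<in> PI" using PI_R[OF v, of 0 1] n3 by simp
  have x1: "(\<lambda>k. if k = 1 \<or> k = 2 then (if k = 0 \<or> k = 1 then v k else 0) else 0) \<in> PI"
    using PI_R[OF w, of 1 2] n3 by simp
  have "(\<lambda>k. (if k = 0 \<or> k = 1 then v k else 0) + (-1) * (if k = 1 \<or> k = 2 then (if k = 0 \<or> k = 1 then v k else 0) else 0)) \<in> PI"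
    using PI_add[OF w PI_scale[OF x1, of "-1"]] .
  moreover have "(\<lambda>k. (if k = 0 \<or> k = 1 then v k else 0) + (-1) * (if k = 1 \<or> k = 2 then (if k = 0 \<or> k = 1 then v k else 0) else 0))
      = (\<lambda>k. v 0 * stdbasis 0 k)" by (auto simp: stdbasis_def fun_eq_iff)
  ultimately have "(\<lambda>k. v 0 * stdbasis 0 k) \<in> PI" by simp
  then have "(\<lambda>k. (1 / v 0) * (v 0 * stdbasis 0 k)) \<in> PI" by (rule PI_scale)
  then have e0: "stdbasis 0 \<in> PI" using v0 by (simp add: fun_eq_iff)
  have ej: "stdbasis j \<in> PI" if j: "j < n" for j
  proof (cases "j = 0")
    case True then show ?thesis using e0 by simp
  next
    case False
    have "oV_act p q (stdbasis 0) (stdbasis j) (stdbasis 0) \<in> PI" using PI_T[OF e0, of 0 j] False j by simp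
    then have "(\<lambda>k. (-1) * oV_act p q (stdbasis 0) (stdbasis j) (stdbasis 0) k) \<in> PI" by (rule PI_scale)
    moreover have "(\<lambda>k. (-1) * oV_act p q (stdbasis 0) (stdbasis j) (stdbasis 0) k) = stdbasis j"
      unfolding oV_basis[OF le_less_trans[OF le0 j] j] using n3 False p3 by (auto simp: stdbasis_def fun_eq_iff sgn_0)
    ultimately show ?thesis by simp
  qed
  have part: "(\<lambda>k. \<Sum>j<m. x j * stdbasis j k) \<in> PI" if "m \<le> n" for m x
    using that
  proof (induction m)
    case 0 then show ?case using PI_zero by simp
  next
    case (Suc m)
    have "m < n" using Suc.prems by simp
    have "(\<lambda>k. x m * stdbasis m k) \<in> PI" using PI_scale[OF ej[OF \<open>m < n\<close>]] .
    then have "(\<lambda>k. (\<Sum>j<m. x j * stdbasis j k) + x m * stdbasis m k) \<in> PI"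
      using PI_add[OF Suc.IH] Suc.prems by simp
    then show ?case by simp
  qed
  show ?thesis
  proof
    fix x assume x: "x \<in> Vset n"
    have "x = (\<lambda>k. \<Sum>j<n. x j * stdbasis j k)"
    proof
      fix k
      show "x k = (\<Sum>j<n. x j * stdbasis j k)"
      proof (cases "k < n")
        case True then show ?thesis by (simp add: stdbasis_def if_distrib sum.delta sum.delta' cong: if_cong)
      next
        case False then show ?thesis using x unfolding Vset_def by (simp add: stdbasis_def)
      qed
    qed
    then show "x \<in> PI" using part[of n x] by simp
  qed
qed

end

lemma Pi_full:
  assumes irr: "dec.irr U" and nd: "dec.nondeg U"
  shows "Pi_image Pmap U = Vset n"
proof -
  have smU: "cl0_submodule p q act U" and U0: "U \<noteq> {0}" using irr unfolding dec.irr_def by auto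
  obtain u where u: "u \<in> U" "u \<noteq> 0" using U0 subU[OF smU] subspace_0 by blast
  obtain t where t: "t \<in> U" "bform p q p' act Pmap u t \<noteq> 0" using nd u unfolding dec.nondeg_def by blast
  have Eu: "E u \<in> U" unfolding E_def using sub_Cl0[OF smU EE u(1)] .
  have "Pmap (E u) t \<in> Pi_image Pmap U" using PI_single[OF smU Eu t(1)] .
  moreover have "Pmap (E u) t 0 \<noteq> 0" using t(2) unfolding b_eq \<beta>_def .
  ultimately have "Vset n \<subseteq> Pi_image Pmap U" using PI_full[OF smU] by blast
  then show ?thesis using PI_V[OF smU] by blast
qed


lemma irr_eq: "cl0_irreducible p q act U = dec.irr U"
  unfolding cl0_irreducible_def dec.irr_def ..

lemma main_loc:
  "\<exists>(l::nat) (m::nat) (Ws :: nat \<Rightarrow> 'w set).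
     (\<forall>i\<le>l+m. cl0_submodule p q act (Ws i)) \<and>
     (\<forall>w. \<exists>f. (\<forall>i\<le>l+m. f i \<in> Ws i) \<and> w = (\<Sum>i\<le>l+m. f i)) \<and>
     (\<forall>f. (\<forall>i\<le>l+m. f i \<in> Ws i) \<and> (\<Sum>i\<le>l+m. f i) = 0 \<longrightarrow> (\<forall>i\<le>l+m. f i = 0)) \<and>
     (\<forall>i\<le>l+m. \<forall>j\<le>l+m. i \<noteq> j \<longrightarrow> (\<forall>s\<in>Ws i. \<forall>t\<in>Ws j. bform p q p' act Pmap s t = 0)) \<and>
     (\<forall>s\<in>Ws 0. \<forall>t. Pmap s t = (\<lambda>k. 0)) \<and>
     (\<forall>i\<le>l+m. \<forall>j\<le>l+m. i \<noteq> j \<longrightarrow> (\<forall>s\<in>Ws i. \<forall>t\<in>Ws j. Pmap s t = (\<lambda>k. 0))) \<and>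
     (\<forall>i\<in>{1..l}. Pi_image Pmap (Ws i) = Vset (p+q)) \<and>
     Ws 0 = {s. \<forall>t. bform p q p' act Pmap s t = 0} \<and>
     (\<forall>i\<in>{1..l+m}. \<forall>s\<in>Ws i. (\<forall>t\<in>Ws i. bform p q p' act Pmap s t = 0) \<longrightarrow> s = 0) \<and>
     (\<forall>i\<in>{1..l}. cl0_irreducible p q act (Ws i)) \<and>
     (\<forall>j\<in>{l+1..l+m}. \<exists>X X'.
        cl0_irreducible p q act X \<and> cl0_irreducible p q act X' \<and>
        (\<forall>s\<in>X. \<forall>t\<in>X. bform p q p' act Pmap s t = 0) \<and> (\<forall>s\<in>X'. \<forall>t\<in>X'. bform p q p' act Pmap s t = 0) \<and>
        X \<inter> X' = {0} \<and> Ws j = {x + x' | x x'. x \<in> X \<and> x' \<in> X'}) \<and>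
     (\<forall>U. cl0_irreducible p q act U \<and>
          U \<subseteq> {\<Sum>j\<in>{l+1..l+m}. f j | f. \<forall>j\<in>{l+1..l+m}. f j \<in> Ws j} \<longrightarrow>
          (\<forall>s\<in>U. \<forall>t\<in>U. bform p q p' act Pmap s t = 0))"
proof -
  obtain l m Ws where H: "(\<forall>i\<le>(l::nat)+(m::nat). cl0_submodule p q act (Ws i)) \<and> (\<forall>w. \<exists>f. (\<forall>i\<le>l+m. f i \<in> Ws i) \<and> w = (\<Sum>i\<le>l+m. f i)) \<and> (\<forall>f. (\<forall>i\<le>l+m. f i \<in> Ws i) \<and> (\<Sum>i\<le>l+m. f i) = 0 \<longrightarrow> (\<forall>i\<le>l+m. f i = 0)) \<and> (\<forall>i\<le>l+m. \<forall>j\<le>l+m. i \<noteq> j \<longrightarrow> (\<forall>s\<in>Ws i. \<forall>t\<in>Ws j. bform p q p' act Pmap s t = 0)) \<and> (Ws 0 = {s. \<forall>t. bform p q p' act Pmap s t = 0}) \<and> (\<forall>i\<in>{1..l+m}. dec.nondeg (Ws i)) \<and> (\<forall>i\<in>{1..l}. dec.irr (Ws i)) \<and> (\<forall>j\<in>{l+1..l+m}. dec.hyp (Ws j)) \<and> (\<forall>U. dec.irr U \<and> U \<subseteq> {\<Sum>j\<in>{l+1..l+m}. f j | f. \<forall>j\<in>{l+1..l+m}. f j \<in> Ws j} \<longrightarrow> dec.iso U)"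
    using dec.abstract_main by (elim exE) (rule that)
  have A1: "\<forall>i\<le>l+m. cl0_submodule p q act (Ws i)"
    using H by (elim conjE) assumption
  have A2: "\<forall>w. \<exists>f. (\<forall>i\<le>l+m. f i \<in> Ws i) \<and> w = (\<Sum>i\<le>l+m. f i)"
    using H by (elim conjE) assumption
  have A3: "\<forall>f. (\<forall>i\<le>l+m. f i \<in> Ws i) \<and> (\<Sum>i\<le>l+m. f i) = 0 \<longrightarrow> (\<forall>i\<le>l+m. f i = 0)"
    using H by (elim conjE) assumption
  have A4: "\<forall>i\<le>l+m. \<forall>j\<le>l+m. i \<noteq> j \<longrightarrow> (\<forall>s\<in>Ws i. \<forall>t\<in>Ws j. bform p q p' act Pmap s t = 0)"
    using H by (elim conjE) assumption
  have A5: "Ws 0 = {s. \<forall>t. bform p q p' act Pmap s t = 0}"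
    using H by (elim conjE) assumption
  have A6: "\<forall>i\<in>{1..l+m}. dec.nondeg (Ws i)"
    using H by (elim conjE) assumption
  have A7: "\<forall>i\<in>{1..l}. dec.irr (Ws i)"
    using H by (elim conjE) assumption
  have A8: "\<forall>j\<in>{l+1..l+m}. dec.hyp (Ws j)"
    using H by (elim conjE) assumption
  have A9: "\<forall>U. dec.irr U \<and> U \<subseteq> {\<Sum>j\<in>{l+1..l+m}. f j | f. \<forall>j\<in>{l+1..l+m}. f j \<in> Ws j} \<longrightarrow> dec.iso U"
    using H by (elim conjE) assumption
  show ?thesis
  proof (rule exI[of _ l], rule exI[of _ m], rule exI[of _ Ws], intro conjI)
    show "\<forall>i\<le>l+m. cl0_submodule p q act (Ws i)" by (rule A1)
    show "\<forall>w. \<exists>f. (\<forall>i\<le>l+m. f i \<in> Ws i) \<and> w = (\<Sum>i\<le>l+m. f i)" by (rule A2)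
    show "\<forall>f. (\<forall>i\<le>l+m. f i \<in> Ws i) \<and> (\<Sum>i\<le>l+m. f i) = 0 \<longrightarrow> (\<forall>i\<le>l+m. f i = 0)" by (rule A3)
    show "\<forall>i\<le>l+m. \<forall>j\<le>l+m. i \<noteq> j \<longrightarrow> (\<forall>s\<in>Ws i. \<forall>t\<in>Ws j. bform p q p' act Pmap s t = 0)" by (rule A4)
    show "\<forall>s\<in>Ws 0. \<forall>t. Pmap s t = (\<lambda>k. 0)"
    proof (intro ballI allI)
      fix s t assume s: "s \<in> Ws 0"
      show "Pmap s t = (\<lambda>k. 0)"
        by (rule P_zero[of "Ws 0"]) (use A1 s A5 in auto)
    qed
    show "\<forall>i\<le>l+m. \<forall>j\<le>l+m. i \<noteq> j \<longrightarrow> (\<forall>s\<in>Ws i. \<forall>t\<in>Ws j. Pmap s t = (\<lambda>k. 0))"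
    proof (intro allI impI ballI)
      fix i j s t assume ij: "i \<le> l + m" "j \<le> l + m" "i \<noteq> j" and s: "s \<in> Ws i" and t: "t \<in> Ws j"
      show "Pmap s t = (\<lambda>k. 0)"
        by (rule P_zero[of "Ws i"]) (use A1 A4 ij s t in auto)
    qed
    show "\<forall>i\<in>{1..l}. Pi_image Pmap (Ws i) = Vset (p+q)"
    proof
      fix i assume i: "i \<in> {1..l}"
      then have "i \<in> {1..l+m}" by auto
      then show "Pi_image Pmap (Ws i) = Vset (p+q)" using Pi_full A7 A6 i by blast
    qed
    show "Ws 0 = {s. \<forall>t. bform p q p' act Pmap s t = 0}" by (rule A5)
    show "\<forall>i\<in>{1..l+m}. \<forall>s\<in>Ws i. (\<forall>t\<in>Ws i. bform p q p' act Pmap s t = 0) \<longrightarrow> s = 0"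
      using A6 unfolding dec.nondeg_def by blast
    show "\<forall>i\<in>{1..l}. cl0_irreducible p q act (Ws i)" using A7 irr_eq by blast
    show "\<forall>j\<in>{l+1..l+m}. \<exists>X X'.
        cl0_irreducible p q act X \<and> cl0_irreducible p q act X' \<and>
        (\<forall>s\<in>X. \<forall>t\<in>X. bform p q p' act Pmap s t = 0) \<and> (\<forall>s\<in>X'. \<forall>t\<in>X'. bform p q p' act Pmap s t = 0) \<and>
        X \<inter> X' = {0} \<and> Ws j = {x + x' | x x'. x \<in> X \<and> x' \<in> X'}"
      using A8 unfolding dec.hyp_def dec.iso_def irr_eq .
    show "\<forall>U. cl0_irreducible p q act U \<and>
          U \<subseteq> {\<Sum>j\<in>{l+1..l+m}. f j | f. \<forall>j\<in>{l+1..l+m}. f j \<in> Ws j} \<longrightarrow>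
          (\<forall>s\<in>U. \<forall>t\<in>U. bform p q p' act Pmap s t = 0)"
      using A9 unfolding dec.iso_def irr_eq .
  qed
qed

end

theorem mainTheorem3:
  fixes p q p' p'' :: nat
    and act :: "(nat set \<Rightarrow> real) \<Rightarrow> 'w::euclidean_space \<Rightarrow> 'w"
    and Pmap :: "'w \<Rightarrow> 'w \<Rightarrow> nat \<Rightarrow> real"
  assumes "p = p' + p''"
    and "p' mod 4 = 3"
    and "cl0_module p q act"
    and "wedge2_map (p+q) Pmap"
    and "oV_equivariant p q act Pmap"
  defines "b \<equiv> bform p q p' act Pmap"
  shows "\<exists>(l::nat) (m::nat) (Ws :: nat \<Rightarrow> 'w set).
     \<comment> \<open>direct sum decomposition into submodules\<close>
     (\<forall>i\<le>l+m. cl0_submodule p q act (Ws i)) \<and>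
     (\<forall>w. \<exists>f. (\<forall>i\<le>l+m. f i \<in> Ws i) \<and> w = (\<Sum>i\<le>l+m. f i)) \<and>
     (\<forall>f. (\<forall>i\<le>l+m. f i \<in> Ws i) \<and> (\<Sum>i\<le>l+m. f i) = 0 \<longrightarrow> (\<forall>i\<le>l+m. f i = 0)) \<and>
     \<comment> \<open>b-orthogonality\<close>
     (\<forall>i\<le>l+m. \<forall>j\<le>l+m. i \<noteq> j \<longrightarrow> (\<forall>s\<in>Ws i. \<forall>t\<in>Ws j. b s t = 0)) \<and>
     \<comment> \<open>(1)\<close>
     (\<forall>s\<in>Ws 0. \<forall>t. Pmap s t = (\<lambda>k. 0)) \<and>
     (\<forall>i\<le>l+m. \<forall>j\<le>l+m. i \<noteq> j \<longrightarrow> (\<forall>s\<in>Ws i. \<forall>t\<in>Ws j. Pmap s t = (\<lambda>k. 0))) \<and>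
     (\<forall>i\<in>{1..l}. Pi_image Pmap (Ws i) = Vset (p+q)) \<and>
     \<comment> \<open>(2)\<close>
     Ws 0 = {s. \<forall>t. b s t = 0} \<and>
     (\<forall>i\<in>{1..l+m}. \<forall>s\<in>Ws i. (\<forall>t\<in>Ws i. b s t = 0) \<longrightarrow> s = 0) \<and>
     \<comment> \<open>(3)\<close>
     (\<forall>i\<in>{1..l}. cl0_irreducible p q act (Ws i)) \<and>
     (\<forall>j\<in>{l+1..l+m}. \<exists>X X'.
        cl0_irreducible p q act X \<and> cl0_irreducible p q act X' \<and>
        (\<forall>s\<in>X. \<forall>t\<in>X. b s t = 0) \<and> (\<forall>s\<in>X'. \<forall>t\<in>X'. b s t = 0) \<and>
        X \<inter> X' = {0} \<and> Ws j = {x + x' | x x'. x \<in> X \<and> x' \<in> X'}) \<and>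
     \<comment> \<open>(4)\<close>
     (\<forall>U. cl0_irreducible p q act U \<and>
          U \<subseteq> {\<Sum>j\<in>{l+1..l+m}. f j | f. \<forall>j\<in>{l+1..l+m}. f j \<in> Ws j} \<longrightarrow>
          (\<forall>s\<in>U. \<forall>t\<in>U. b s t = 0))"
proof -
  interpret setting p q p' act Pmap
    by (unfold_locales) (use assms in simp_all)
  show ?thesis unfolding b_def by (rule main_loc)
qed

end
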